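(* Let $a,b,c,d>0$ and $\varphi(x_1,x_2)=\max(ax_1,-cx_1)+\max(bx_2,-dx_2)$, i.e. $\varphi=ax_1+bx_2$ for $x_1>0,x_2>0$; $-cx_1+bx_2$ for $x_1<0,x_2>0$; $-cx_1-dx_2$ for $x_1<0,x_2<0$; $ax_1-dx_2$ for $x_1>0,x_2<0$. Let $(T_\varphi u)(x)=u(x_1,x_2,x_3-\varphi(x_1,x_2))$ and $V_\varphi=FT_\varphi F^{-1}$, where $F$ is the Fourier transform $\tilde u(\xi)=(Fu)(\xi)=\int_{\mathbb R^3}e^{ix\cdot\xi}u(x)\,dx$. Then for every $u$ in the Schwartz space $S(\mathbb R^3)$, $$(V_\varphi\tilde u)(\xi)=(P_1P_2\tilde u)(\xi_1+a\xi_3,\xi_2+b\xi_3,\xi_3)+(Q_1P_2\tilde u)(\xi_1-c\xi_3,\xi_2+b\xi_3,\xi_3)$$ $$+(Q_1Q_2\tilde u)(\xi_1-c\xi_3,\xi_2-d\xi_3,\xi_3)+(P_1Q_2\tilde u)(\xi_1+a\xi_3,\xi_2-d\xi_3,\xi_3),$$ where (e.g.) $(P_1P_2\tilde u)(\xi_1+a\xi_3,\xi_2+b\xi_3,\xi_3)$ means the function $P_1P_2\tilde u$ evaluated at the point $(\xi_1+a\xi_3,\xi_2+b\xi_3,\xi_3)$.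
   Context: $P_k=\frac12(I+S_k)$, $Q_k=\frac12(I-S_k)$, $k=1,2$, where $I$ is the identity and $S_k$ are the one-dimensional singular integral operators $$(S_1\tilde u)(\xi_1,\xi_2,\xi_3)=\frac{i}{\pi}\,\mathrm{v.p.}\int_{-\infty}^{+\infty}\frac{\tilde u(\eta,\xi_2,\xi_3)}{\xi_1-\eta}\,d\eta,\qquad (S_2\tilde u)(\xi_1,\xi_2,\xi_3)=\frac{i}{\pi}\,\mathrm{v.p.}\int_{-\infty}^{+\infty}\frac{\tilde u(\xi_1,\eta,\xi_3)}{\xi_2-\eta}\,d\eta.$$ *)

theory Defs
  imports "HOL-Analysis.Analysis"
begin

type_synonym R3 = "real ^ 3"

definition pdiff :: "3 \<Rightarrow> (R3 \<Rightarrow> complex) \<Rightarrow> R3 \<Rightarrow> complex" where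
  "pdiff j f x = vector_derivative (\<lambda>t. f (x + t *\<^sub>R axis j 1)) (at 0)"

fun pdiffs :: "3 list \<Rightarrow> (R3 \<Rightarrow> complex) \<Rightarrow> R3 \<Rightarrow> complex" where
  "pdiffs [] f = f"
| "pdiffs (j # js) f = pdiff j (pdiffs js f)"

definition schwartz :: "(R3 \<Rightarrow> complex) \<Rightarrow> bool" where
  "schwartz u \<longleftrightarrow>
     (\<forall>js j x. (\<lambda>t. pdiffs js u (x + t *\<^sub>R axis j 1)) differentiable (at 0)) \<and>
     (\<forall>js. continuous_on UNIV (pdiffs js u)) \<and>
     (\<forall>js (N::nat). \<exists>C. \<forall>x. (1 + norm x) ^ N * norm (pdiffs js u x) \<le> C)"

definition fourier :: "(R3 \<Rightarrow> complex) \<Rightarrow> R3 \<Rightarrow> complex" where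
  "fourier u \<xi> = (\<integral>x. exp (\<i> * complex_of_real (x \<bullet> \<xi>)) * u x \<partial>lborel)"

definition fourier_inv :: "(R3 \<Rightarrow> complex) \<Rightarrow> R3 \<Rightarrow> complex" where
  "fourier_inv v x = complex_of_real ((2 * pi) powr (-3)) *
      (\<integral>\<xi>. exp (- \<i> * complex_of_real (x \<bullet> \<xi>)) * v \<xi> \<partial>lborel)"

definition pv_integral :: "(real \<Rightarrow> complex) \<Rightarrow> real \<Rightarrow> complex" where
  "pv_integral g s = Lim (at_right 0)
     (\<lambda>\<epsilon>. (\<integral>\<eta>. indicator {\<eta>. \<epsilon> < \<bar>s - \<eta>\<bar> \<and> \<bar>s - \<eta>\<bar> < 1 / \<epsilon>} \<eta> *\<^sub>R g \<eta> \<partial>lborel))"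

definition S1 :: "(R3 \<Rightarrow> complex) \<Rightarrow> R3 \<Rightarrow> complex" where
  "S1 v \<xi> = (\<i> / complex_of_real pi) *
     pv_integral (\<lambda>\<eta>. v (vector [\<eta>, \<xi>$2, \<xi>$3]) / complex_of_real (\<xi>$1 - \<eta>)) (\<xi>$1)"

definition S2 :: "(R3 \<Rightarrow> complex) \<Rightarrow> R3 \<Rightarrow> complex" where
  "S2 v \<xi> = (\<i> / complex_of_real pi) *
     pv_integral (\<lambda>\<eta>. v (vector [\<xi>$1, \<eta>, \<xi>$3]) / complex_of_real (\<xi>$2 - \<eta>)) (\<xi>$2)"

definition P1 :: "(R3 \<Rightarrow> complex) \<Rightarrow> R3 \<Rightarrow> complex" where
  "P1 v \<xi> = (v \<xi> + S1 v \<xi>) / 2"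
definition Q1 :: "(R3 \<Rightarrow> complex) \<Rightarrow> R3 \<Rightarrow> complex" where
  "Q1 v \<xi> = (v \<xi> - S1 v \<xi>) / 2"
definition P2 :: "(R3 \<Rightarrow> complex) \<Rightarrow> R3 \<Rightarrow> complex" where
  "P2 v \<xi> = (v \<xi> + S2 v \<xi>) / 2"
definition Q2 :: "(R3 \<Rightarrow> complex) \<Rightarrow> R3 \<Rightarrow> complex" where
  "Q2 v \<xi> = (v \<xi> - S2 v \<xi>) / 2"

definition phi :: "real \<Rightarrow> real \<Rightarrow> real \<Rightarrow> real \<Rightarrow> R3 \<Rightarrow> real" where
  "phi a b c d x = max (a * x$1) (- c * x$1) + max (b * x$2) (- d * x$2)"

definition T_phi :: "real \<Rightarrow> real \<Rightarrow> real \<Rightarrow> real \<Rightarrow> (R3 \<Rightarrow> complex) \<Rightarrow> R3 \<Rightarrow> complex" where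
  "T_phi a b c d u x = u (vector [x$1, x$2, x$3 - phi a b c d x])"

definition V_phi :: "real \<Rightarrow> real \<Rightarrow> real \<Rightarrow> real \<Rightarrow> (R3 \<Rightarrow> complex) \<Rightarrow> R3 \<Rightarrow> complex" where
  "V_phi a b c d v = fourier (T_phi a b c d (fourier_inv v))"

end

theory Submission
  imports Defs "HOL-Probability.Sinc_Integral" "HOL-Probability.Characteristic_Functions" "HOL-Real_Asymp.Real_Asymp"
begin

lemma inner3: "(x::R3) \<bullet> y = x$1*y$1 + x$2*y$2 + x$3*y$3"
  by (simp add: inner_vec_def sum_3)

lemma vec3_eq: "(x::R3) = y \<longleftrightarrow> x$1 = y$1 \<and> x$2 = y$2 \<and> x$3 = y$3"
  by (simp add: vec_eq_iff forall_3)

lemma prod_Basis_R3: "(\<Prod>b\<in>(Basis::R3 set). f b) = f (axis 1 1) * f (axis 2 1) * f (axis 3 1)"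
proof -
  have B: "(Basis::R3 set) = {axis 1 1, axis 2 1, axis 3 1}"
    by (auto simp: Basis_vec_def UNIV_3)
  have "axis (1::3) (1::real) \<noteq> axis 2 1" "axis (1::3) (1::real) \<noteq> axis 3 1" "axis (2::3) (1::real) \<noteq> axis 3 1"
    by (auto simp: axis_eq_axis)
  then show ?thesis unfolding B by (simp add: mult.assoc)
qed

lemma vector3_alt: "vector [a,b,c] = a *\<^sub>R axis 1 1 + b *\<^sub>R axis 2 1 + (c *\<^sub>R axis 3 1 :: R3)"
  by (simp add: vec3_eq axis_def)

definition E1 :: "real \<times> real \<times> real \<Rightarrow> R3" where "E1 = (\<lambda>(t,y,z). vector [t,y,z])"
definition E2 :: "real \<times> real \<times> real \<Rightarrow> R3" where "E2 = (\<lambda>(t,y,z). vector [y,t,z])"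
definition E3 :: "real \<times> real \<times> real \<Rightarrow> R3" where "E3 = (\<lambda>(t,y,z). vector [y,z,t])"

lemma cont_E1: "continuous_on UNIV E1"
  unfolding E1_def split_beta vector3_alt by (intro continuous_intros)
lemma cont_E2: "continuous_on UNIV E2"
  unfolding E2_def split_beta vector3_alt by (intro continuous_intros)
lemma cont_E3: "continuous_on UNIV E3"
  unfolding E3_def split_beta vector3_alt by (intro continuous_intros)

lemma E_meas[measurable]: "E1 \<in> borel_measurable borel" "E2 \<in> borel_measurable borel" "E3 \<in> borel_measurable borel"
  using cont_E1 cont_E2 cont_E3 by (auto intro: borel_measurable_continuous_onI)

lemma emeasure_lborel_prod3:
  assumes "a1 \<le> b1" "a2 \<le> b2" "a3 \<le> b3"
  shows "emeasure (lborel :: (real \<times> real \<times> real) measure) ({a1<..<b1} \<times> {a2<..<b2} \<times> {a3<..<b3})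
     = ennreal ((b1 - a1) * (b2 - a2) * (b3 - a3))"
proof -
  have "emeasure (lborel :: (real \<times> real \<times> real) measure) ({a1<..<b1} \<times> {a2<..<b2} \<times> {a3<..<b3})
     = emeasure (lborel \<Otimes>\<^sub>M (lborel \<Otimes>\<^sub>M lborel)) ({a1<..<b1} \<times> ({a2<..<b2} \<times> {a3<..<b3}))"
    by (simp add: lborel_prod)
  also have "\<dots> = emeasure lborel {a1<..<b1} * emeasure (lborel \<Otimes>\<^sub>M lborel) ({a2<..<b2} \<times> {a3<..<b3})"
    by (rule sigma_finite_measure.emeasure_pair_measure_Times[OF lborel_pair.P.sigma_finite_measure_axioms]) auto
  also have "emeasure (lborel \<Otimes>\<^sub>M lborel) ({a2<..<b2} \<times> {a3<..<b3}) = emeasure lborel {a2<..<b2} * emeasure lborel {a3<..<b3}"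
    by (rule lborel.emeasure_pair_measure_Times) auto
  also have "emeasure lborel {a1<..<b1} * (emeasure lborel {a2<..<b2} * emeasure lborel {a3<..<b3})
        = ennreal ((b1 - a1) * (b2 - a2) * (b3 - a3))"
    using assms by (simp add: ennreal_mult mult.assoc)
  finally show ?thesis .
qed

lemma le3_of_Basis:
  assumes le: "\<And>b. b \<in> Basis \<Longrightarrow> (l::R3) \<bullet> b \<le> u \<bullet> b"
  shows "l$1 \<le> u$1" "l$2 \<le> u$2" "l$3 \<le> u$3"
  using le[of "axis 1 1"] le[of "axis 2 1"] le[of "axis 3 1"]
  by (auto simp: cart_eq_inner_axis[symmetric] Basis_vec_def)

lemma prod_box_R3: "(\<Prod>b\<in>Basis. ((u::R3) - l) \<bullet> b) = (u$1 - l$1) * (u$2 - l$2) * (u$3 - l$3)"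
  by (simp add: prod_Basis_R3 cart_eq_inner_axis[symmetric])

lemma lborel_E1: "distr lborel borel E1 = lborel"
proof (rule lborel_eqI[symmetric])
  fix l u :: R3 assume le: "\<And>b. b \<in> Basis \<Longrightarrow> l \<bullet> b \<le> u \<bullet> b"
  note le3 = le3_of_Basis[OF le]
  have "E1 -` box l u = {l$1<..<u$1} \<times> {l$2<..<u$2} \<times> {l$3<..<u$3}"
    by (auto simp: E1_def mem_box_cart forall_3)
  then show "emeasure (distr lborel borel E1) (box l u) = (\<Prod>b\<in>Basis. (u - l) \<bullet> b)"
    using le3 by (simp add: emeasure_distr prod_box_R3 emeasure_lborel_prod3)
qed simp

lemma lborel_E2: "distr lborel borel E2 = lborel"
proof (rule lborel_eqI[symmetric])
  fix l u :: R3 assume le: "\<And>b. b \<in> Basis \<Longrightarrow> l \<bullet> b \<le> u \<bullet> b"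
  note le3 = le3_of_Basis[OF le]
  have "E2 -` box l u = {l$2<..<u$2} \<times> {l$1<..<u$1} \<times> {l$3<..<u$3}"
    by (auto simp: E2_def mem_box_cart forall_3)
  then show "emeasure (distr lborel borel E2) (box l u) = (\<Prod>b\<in>Basis. (u - l) \<bullet> b)"
    using le3 by (simp add: emeasure_distr prod_box_R3 emeasure_lborel_prod3 ac_simps)
qed simp

lemma lborel_E3: "distr lborel borel E3 = lborel"
proof (rule lborel_eqI[symmetric])
  fix l u :: R3 assume le: "\<And>b. b \<in> Basis \<Longrightarrow> l \<bullet> b \<le> u \<bullet> b"
  note le3 = le3_of_Basis[OF le]
  have "E3 -` box l u = {l$3<..<u$3} \<times> {l$1<..<u$1} \<times> {l$2<..<u$2}"
    by (auto simp: E3_def mem_box_cart forall_3)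
  then show "emeasure (distr lborel borel E3) (box l u) = (\<Prod>b\<in>Basis. (u - l) \<bullet> b)"
    using le3 by (simp add: emeasure_distr prod_box_R3 emeasure_lborel_prod3 ac_simps)
qed simp

lemma lborel_prod3: "(lborel :: (real \<times> real \<times> real) measure) = lborel \<Otimes>\<^sub>M lborel"
  by (simp add: lborel_prod)

lemma integral_E:
  fixes f :: "R3 \<Rightarrow> 'b::{banach, second_countable_topology}"
  assumes "E \<in> borel_measurable borel" "distr lborel borel E = lborel" "f \<in> borel_measurable borel"
  shows "integral\<^sup>L lborel f = (\<integral>p. f (E p) \<partial>lborel)"
proof -
  have "integral\<^sup>L lborel f = integral\<^sup>L (distr lborel borel E) f" using assms(2) by simp
  also have "\<dots> = (\<integral>p. f (E p) \<partial>lborel)" using assms by (intro integral_distr) auto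
  finally show ?thesis .
qed

lemma integrable_E:
  fixes f :: "R3 \<Rightarrow> 'b::{banach, second_countable_topology}"
  assumes "E \<in> borel_measurable borel" "distr lborel borel E = lborel" "f \<in> borel_measurable borel"
  shows "integrable lborel f \<longleftrightarrow> integrable lborel (\<lambda>p. f (E p))"
proof -
  have "integrable lborel f = integrable (distr lborel borel E) f" using assms(2) by simp
  also have "\<dots> = integrable lborel (\<lambda>p. f (E p))" using assms by (intro integrable_distr_eq) auto
  finally show ?thesis .
qed

definition r1 :: "real \<Rightarrow> real" where "r1 t = inverse (1 + t^2)"

lemma r1_pos: "r1 t > 0" unfolding r1_def by (simp add: add_pos_nonneg)

lemma integrable_r1: "integrable lborel r1"
  using integrable_inverse_1_plus_square unfolding set_integrable_def r1_def by simp

lemma r1_meas[measurable]: "r1 \<in> borel_measurable borel"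
  unfolding r1_def by measurable

lemma integrable_prod_mult:
  fixes f :: "'a::euclidean_space \<Rightarrow> real" and g :: "'b::euclidean_space \<Rightarrow> real"
  assumes f: "integrable lborel f" and g: "integrable lborel g"
  shows "integrable (lborel \<Otimes>\<^sub>M lborel) (\<lambda>p. f (fst p) * g (snd p))"
proof (rule lborel_pair.Fubini_integrable)
  show "(\<lambda>p. f (fst p) * g (snd p)) \<in> borel_measurable (lborel \<Otimes>\<^sub>M lborel)"
    using f g by measurable
  have "(\<lambda>x. \<integral>y. norm (f (fst (x, y)) * g (snd (x, y))) \<partial>lborel) = (\<lambda>x. \<bar>f x\<bar> * (\<integral>y. \<bar>g y\<bar> \<partial>lborel))"
    by (simp add: abs_mult)
  then show "integrable lborel (\<lambda>x. \<integral>y. norm (f (fst (x, y)) * g (snd (x, y))) \<partial>lborel)"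
    using f by simp
  show "AE x in lborel. integrable lborel (\<lambda>y. f (fst (x, y)) * g (snd (x, y)))"
    using g by simp
qed

definition w3 :: "R3 \<Rightarrow> real" where "w3 x = r1 (x$1) * r1 (x$2) * r1 (x$3)"

lemma w3_meas[measurable]: "w3 \<in> borel_measurable borel"
  unfolding w3_def by measurable

lemma w3_pos: "w3 x > 0" unfolding w3_def using r1_pos by simp

lemma integrable_w3: "integrable lborel w3"
proof -
  have "integrable (lborel \<Otimes>\<^sub>M lborel) (\<lambda>p. r1 (fst p) * (r1 (fst (snd p)) * r1 (snd (snd p))))"
    using integrable_prod_mult[OF integrable_r1 integrable_prod_mult[OF integrable_r1 integrable_r1, unfolded lborel_prod]]
    by (simp add: lborel_prod)
  then have "integrable lborel (\<lambda>p. w3 (E1 p))"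
    by (simp add: lborel_prod3 w3_def E1_def split_beta mult.assoc)
  then show ?thesis using integrable_E[OF _ lborel_E1, of w3] by simp
qed

lemma one_plus_sq_le: "1 + (x$i)^2 \<le> (1 + norm (x::R3))^2"
proof -
  have "\<bar>x$i\<bar> \<le> norm x" by (rule component_le_norm_cart)
  then have "(x$i)^2 \<le> (norm x)^2" by (metis abs_le_square_iff real_norm_def norm_ge_zero abs_of_nonneg)
  then show ?thesis by (simp add: power2_eq_square algebra_simps) (smt (verit) norm_ge_zero)
qed

lemma decay_w3: "inverse ((1 + norm (x::R3))^6) \<le> w3 x"
proof -
  have "(1 + (x$1)^2) * (1 + (x$2)^2) * (1 + (x$3)^2) \<le> (1 + norm x)^2 * (1 + norm x)^2 * (1 + norm x)^2"
    by (intro mult_mono one_plus_sq_le) (auto intro: add_nonneg_nonneg)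
  also have "\<dots> = (1 + norm x)^6" by algebra
  finally have *: "(1 + (x$1)^2) * (1 + (x$2)^2) * (1 + (x$3)^2) \<le> (1 + norm x)^6" .
  have "inverse ((1 + norm x)^6) \<le> inverse ((1 + (x$1)^2) * (1 + (x$2)^2) * (1 + (x$3)^2))"
    by (rule le_imp_inverse_le[OF *]) (auto intro!: mult_pos_pos add_pos_nonneg)
  then show ?thesis by (simp add: w3_def r1_def mult.assoc)
qed

lemma decay_bound_w3:
  assumes "(1 + norm x)^6 * norm (f x) \<le> C"
  shows "norm (f (x::R3)) \<le> C * w3 x"
proof -
  have p0: "1 + norm x > 0" by (simp add: add_pos_nonneg)
  then have p: "(1 + norm x)^6 > 0" by simp
  have "norm (f x) \<le> C * inverse ((1 + norm x)^6)"
    using assms p p0 by (simp add: field_simps)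
  also have "\<dots> \<le> C * w3 x"
  proof (cases "C \<ge> 0")
    case True then show ?thesis by (intro mult_left_mono decay_w3) auto
  next
    case False
    then have "(1 + norm x)^6 * norm (f x) < 0" using assms by simp
    then show ?thesis using p by (simp add: mult_less_0_iff)
  qed
  finally show ?thesis .
qed

lemma decay_integrable:
  fixes f :: "R3 \<Rightarrow> 'b::{banach, second_countable_topology}"
  assumes "f \<in> borel_measurable borel" "\<And>x. (1 + norm x)^6 * norm (f x) \<le> C"
  shows "integrable lborel f"
proof (rule Bochner_Integration.integrable_bound[of _ "\<lambda>x. C * w3 x"])
  show "integrable lborel (\<lambda>x. C * w3 x)" using integrable_w3 by simp
  show "f \<in> borel_measurable lborel" using assms by simp
  show "AE x in lborel. norm (f x) \<le> norm (C * w3 x)"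
  proof (intro AE_I2)
    fix x
    have "norm (f x) \<le> C * w3 x" using decay_bound_w3[of x f C] assms(2)[of x] by simp
    then show "norm (f x) \<le> norm (C * w3 x)" by (smt (verit) real_norm_def)
  qed
qed

lemma norm_iexp [simp]: "norm (iexp x) = 1"
  by (simp add: norm_exp_i_times)

lemma iexp_add: "iexp (a + b) = iexp a * iexp b"
  by (simp add: distrib_left exp_add)

lemma has_vector_derivative_iexp_lin:
  "((\<lambda>t. iexp (t * w)) has_vector_derivative (\<i> * of_real w * iexp (t * w))) (at t)"
proof -
  have "((\<lambda>z. exp ((\<i> * of_real w) * z)) has_field_derivative (exp ((\<i> * of_real w) * of_real t) * (\<i> * of_real w))) (at (of_real t))"
    by (auto intro!: derivative_eq_intros)
  from has_vector_derivative_real_field[OF this]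
  show ?thesis by (simp add: mult_ac)
qed

lemma r1_tendsto: "(r1 \<longlongrightarrow> 0) at_top" "(r1 \<longlongrightarrow> 0) at_bot"
  unfolding r1_def by real_asymp+

lemma integrable_iexp_mult:
  fixes G :: "real \<Rightarrow> complex"
  assumes "integrable lborel G"
  shows "integrable lborel (\<lambda>t. iexp (t * w) * G t)"
proof (rule Bochner_Integration.integrable_bound[OF assms])
  show "(\<lambda>t. iexp (t * w) * G t) \<in> borel_measurable lborel"
    using borel_measurable_integrable[OF assms] by measurable
qed (simp add: norm_mult)

lemma ibp1:
  fixes G G' :: "real \<Rightarrow> complex" and w :: real
  assumes D: "\<And>t. (G has_vector_derivative G' t) (at t)"
    and cG': "continuous_on UNIV G'"
    and iG: "integrable lborel G" and iG': "integrable lborel G'"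
    and lt: "(G \<longlongrightarrow> 0) at_top" and lb: "(G \<longlongrightarrow> 0) at_bot"
  shows "(\<integral>t. iexp (t * w) * G' t \<partial>lborel) = - \<i> * of_real w * (\<integral>t. iexp (t * w) * G t \<partial>lborel)"
proof -
  define h where "h t = iexp (t * w) * G t" for t
  define h' where "h' t = iexp (t * w) * G' t + \<i> * of_real w * iexp (t * w) * G t" for t
  have dh: "(h has_vector_derivative h' t) (at t)" for t
    using has_vector_derivative_mult[OF has_vector_derivative_iexp_lin[of w t] D[of t]]
    unfolding h_def[abs_def] h'_def by simp
  have contG: "continuous_on UNIV G"
    using D by (intro continuous_on_vector_derivative) (auto intro: has_vector_derivative_at_within)
  have ch': "isCont h' t" for t
    unfolding h'_def using cG' contG
    by (intro continuous_intros) (auto simp: continuous_on_eq_continuous_at)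
  have i1: "integrable lborel (\<lambda>t. iexp (t * w) * G' t)" by (rule integrable_iexp_mult[OF iG'])
  have i2: "integrable lborel (\<lambda>t. iexp (t * w) * G t)" by (rule integrable_iexp_mult[OF iG])
  have ih': "integrable lborel h'"
    unfolding h'_def using i1 i2 by (simp add: mult.assoc)
  have limh: "(h \<longlongrightarrow> 0) at_top" "(h \<longlongrightarrow> 0) at_bot"
  proof -
    have n: "(\<lambda>t. norm (h t)) = (\<lambda>t. norm (G t))" by (simp add: h_def norm_mult)
    have "((\<lambda>t. norm (G t)) \<longlongrightarrow> 0) at_top" "((\<lambda>t. norm (G t)) \<longlongrightarrow> 0) at_bot"
      using tendsto_norm_zero[OF lt] tendsto_norm_zero[OF lb] by auto
    then show "(h \<longlongrightarrow> 0) at_top" "(h \<longlongrightarrow> 0) at_bot"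
      unfolding n[symmetric] by (auto simp only: tendsto_norm_zero_iff)
  qed
  have "(LBINT t=-\<infinity>..\<infinity>. h' t) = 0 - 0"
  proof (rule interval_integral_FTC_integrable[where F = h])
    show "set_integrable lborel (einterval (-\<infinity>) \<infinity>) h'"
      using ih' by (simp add: set_integrable_def)
    show "((h \<circ> real_of_ereal) \<longlongrightarrow> 0) (at_right (-\<infinity>))"
      using limh by (simp add: ereal_tendsto_simps1)
    show "((h \<circ> real_of_ereal) \<longlongrightarrow> 0) (at_left \<infinity>)"
      using limh by (simp add: ereal_tendsto_simps1)
  qed (auto simp: dh ch')
  then have "(\<integral>t. h' t \<partial>lborel) = 0"
    by (simp add: interval_lebesgue_integral_def set_lebesgue_integral_def)
  moreover have "(\<integral>t. h' t \<partial>lborel) = (\<integral>t. iexp (t * w) * G' t \<partial>lborel) + \<i> * of_real w * (\<integral>t. iexp (t * w) * G t \<partial>lborel)"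
    unfolding h'_def using i1 i2 by (simp add: mult.assoc)
  ultimately have "(\<integral>t. iexp (t * w) * G' t \<partial>lborel) + \<i> * of_real w * (\<integral>t. iexp (t * w) * G t \<partial>lborel) = 0"
    by simp
  then show ?thesis by (simp only: add_eq_0_iff2 minus_mult_left)
qed

lemma Ej_exists:
  fixes j :: 3
  shows "\<exists>E::real \<times> real \<times> real \<Rightarrow> R3. E \<in> borel_measurable borel \<and> distr lborel borel E = lborel \<and>
     (\<forall>t p. E (t, p) = E (0, p) + t *\<^sub>R axis j 1) \<and> (\<forall>p. E (0, p) $ j = 0)"
proof -
  have "j = 1 \<or> j = 2 \<or> j = 3" by (rule exhaust_3)
  then show ?thesis
  proof (elim disjE)
    assume j: "j = 1" show ?thesis unfolding j
      by (intro exI[of _ E1] conjI E_meas lborel_E1 allI) (auto simp: E1_def vec3_eq axis_def)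
  next
    assume j: "j = 2" show ?thesis unfolding j
      by (intro exI[of _ E2] conjI E_meas lborel_E2 allI) (auto simp: E2_def vec3_eq axis_def)
  next
    assume j: "j = 3" show ?thesis unfolding j
      by (intro exI[of _ E3] conjI E_meas lborel_E3 allI) (auto simp: E3_def vec3_eq axis_def)
  qed
qed

lemma fourier_integrable:
  fixes f :: "R3 \<Rightarrow> complex"
  assumes "f \<in> borel_measurable borel" "\<And>x. (1 + norm x)^6 * norm (f x) \<le> C"
  shows "integrable lborel (\<lambda>x. iexp (x \<bullet> \<xi>) * f x)"
  by (rule decay_integrable[where C=C]) (use assms in \<open>auto simp: norm_mult\<close>)

lemma line_decay:
  fixes f :: "R3 \<Rightarrow> complex"
  assumes b: "\<And>x. (1 + norm x)^6 * norm (f x) \<le> C" and x0: "x $ j = 0"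
  shows "norm (f (x + t *\<^sub>R axis j 1)) \<le> C * r1 t"
proof -
  let ?y = "x + t *\<^sub>R axis j 1"
  have yj: "?y $ j = t" using x0 by (simp add: axis_def)
  have C0: "C \<ge> 0" using b[of 0] by (smt (verit) mult_nonneg_nonneg norm_ge_zero zero_le_power add_nonneg_nonneg zero_le_one)
  have p0: "1 + norm ?y > 0" by (simp add: add_pos_nonneg)
  have "1 + t^2 \<le> (1 + norm ?y)^2" using one_plus_sq_le[of ?y j] yj by simp
  also have "\<dots> \<le> (1 + norm ?y)^6" using p0 by (intro power_increasing) auto
  finally have le: "1 + t^2 \<le> (1 + norm ?y)^6" .
  have "(1 + t^2) * norm (f ?y) \<le> (1 + norm ?y)^6 * norm (f ?y)"
    by (intro mult_right_mono le) auto
  also have "\<dots> \<le> C" by (rule b)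
  finally have "(1 + t^2) * norm (f ?y) \<le> C" .
  moreover have "1 + t^2 > 0" by (simp add: add_pos_nonneg)
  ultimately show ?thesis unfolding r1_def by (simp add: field_simps)
qed

lemma ibp3:
  fixes f g :: "R3 \<Rightarrow> complex" and j :: 3 and \<xi> :: R3
  assumes D: "\<And>x t. ((\<lambda>s. f (x + s *\<^sub>R axis j 1)) has_vector_derivative g (x + t *\<^sub>R axis j 1)) (at t)"
    and cg: "continuous_on UNIV g" and cf: "continuous_on UNIV f"
    and bf: "\<And>x. (1 + norm x)^6 * norm (f x) \<le> C" and bg: "\<And>x. (1 + norm x)^6 * norm (g x) \<le> C"
  shows "fourier g \<xi> = - \<i> * of_real (\<xi>$j) * fourier f \<xi>"
proof -
  obtain E :: "real \<times> real \<times> real \<Rightarrow> R3" where Em[measurable]: "E \<in> borel_measurable borel" and El: "distr lborel borel E = lborel"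
    and Ed: "\<And>t p. E (t, p) = E (0, p) + t *\<^sub>R axis j 1" and E0: "\<And>p. E (0, p) $ j = 0"
    using Ej_exists[of j] by blast
  have mf[measurable]: "f \<in> borel_measurable borel" using cf by (rule borel_measurable_continuous_onI)
  have mg[measurable]: "g \<in> borel_measurable borel" using cg by (rule borel_measurable_continuous_onI)
  define F where "F x = iexp (x \<bullet> \<xi>) * f x" for x
  define G where "G x = iexp (x \<bullet> \<xi>) * g x" for x
  have mF[measurable]: "F \<in> borel_measurable borel" unfolding F_def by measurable
  have mG[measurable]: "G \<in> borel_measurable borel" unfolding G_def by measurable
  have iF: "integrable lborel F" unfolding F_def by (rule fourier_integrable[OF mf bf])
  have iG: "integrable lborel G" unfolding G_def by (rule fourier_integrable[OF mg bg])
  have iFE: "integrable (lborel \<Otimes>\<^sub>M lborel) (\<lambda>(t, p). F (E (t, p)))"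
    using iF integrable_E[OF Em El mF] by (simp add: lborel_prod3 case_prod_beta')
  have iGE: "integrable (lborel \<Otimes>\<^sub>M lborel) (\<lambda>(t, p). G (E (t, p)))"
    using iG integrable_E[OF Em El mG] by (simp add: lborel_prod3 case_prod_beta')
  have fF: "fourier f \<xi> = (\<integral>p. (\<integral>t. F (E (t, p)) \<partial>lborel) \<partial>lborel)"
  proof -
    have "fourier f \<xi> = integral\<^sup>L lborel F" unfolding fourier_def F_def ..
    also have "\<dots> = (\<integral>q. F (E q) \<partial>lborel)" by (rule integral_E[OF Em El mF])
    also have "\<dots> = (\<integral>q. F (E q) \<partial>(lborel \<Otimes>\<^sub>M lborel))" by (simp add: lborel_prod3)
    also have "\<dots> = (\<integral>p. (\<integral>t. F (E (t, p)) \<partial>lborel) \<partial>lborel)"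
      using lborel_pair.integral_snd[OF iFE] by (simp add: case_prod_beta')
    finally show ?thesis .
  qed
  have fG: "fourier g \<xi> = (\<integral>p. (\<integral>t. G (E (t, p)) \<partial>lborel) \<partial>lborel)"
  proof -
    have "fourier g \<xi> = integral\<^sup>L lborel G" unfolding fourier_def G_def ..
    also have "\<dots> = (\<integral>q. G (E q) \<partial>lborel)" by (rule integral_E[OF Em El mG])
    also have "\<dots> = (\<integral>q. G (E q) \<partial>(lborel \<Otimes>\<^sub>M lborel))" by (simp add: lborel_prod3)
    also have "\<dots> = (\<integral>p. (\<integral>t. G (E (t, p)) \<partial>lborel) \<partial>lborel)"
      using lborel_pair.integral_snd[OF iGE] by (simp add: case_prod_beta')
    finally show ?thesis .
  qed
  have line: "(\<integral>t. G (E (t, p)) \<partial>lborel) = - \<i> * of_real (\<xi>$j) * (\<integral>t. F (E (t, p)) \<partial>lborel)" for p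
  proof -
    define x0 where "x0 = E (0, p)"
    have x0j: "x0 $ j = 0" unfolding x0_def by (rule E0)
    define Gl where "Gl t = f (x0 + t *\<^sub>R axis j 1)" for t
    define Gl' where "Gl' t = g (x0 + t *\<^sub>R axis j 1)" for t
    have Ex: "E (t, p) = x0 + t *\<^sub>R axis j 1" for t unfolding x0_def by (rule Ed)
    have ph: "iexp (E (t, p) \<bullet> \<xi>) = iexp (x0 \<bullet> \<xi>) * iexp (t * \<xi>$j)" for t
    proof -
      have "E (t, p) \<bullet> \<xi> = x0 \<bullet> \<xi> + t * \<xi>$j"
        unfolding Ex by (simp add: inner_add_left inner_axis')
      then show ?thesis by (simp only: iexp_add)
    qed
    have cl: "continuous_on UNIV (\<lambda>t. x0 + t *\<^sub>R axis j 1)" by (intro continuous_intros)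
    have mGl: "Gl \<in> borel_measurable borel" "Gl' \<in> borel_measurable borel"
      unfolding Gl_def Gl'_def by measurable
    have iGl: "integrable lborel Gl"
      by (rule Bochner_Integration.integrable_bound[of _ "\<lambda>t. C * r1 t"])
         (use integrable_r1 mGl line_decay[OF bf x0j] in \<open>auto simp: Gl_def intro!: AE_I2 order_trans[OF _ abs_ge_self]\<close>)
    have iGl': "integrable lborel Gl'"
      by (rule Bochner_Integration.integrable_bound[of _ "\<lambda>t. C * r1 t"])
         (use integrable_r1 mGl line_decay[OF bg x0j] in \<open>auto simp: Gl'_def intro!: AE_I2 order_trans[OF _ abs_ge_self]\<close>)
    have lim: "(Gl \<longlongrightarrow> 0) at_top" "(Gl \<longlongrightarrow> 0) at_bot"
      by (auto intro!: Lim_null_comparison[where g="\<lambda>t. C * r1 t"] tendsto_mult_right_zero r1_tendsto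
                simp: Gl_def line_decay[OF bf x0j])
    have cGl': "continuous_on UNIV Gl'"
      unfolding Gl'_def by (rule continuous_on_compose2[OF cg cl]) auto
    have DGl: "(Gl has_vector_derivative Gl' t) (at t)" for t
      unfolding Gl_def[abs_def] Gl'_def using D[of x0 t] .
    have "(\<integral>t. G (E (t, p)) \<partial>lborel) = (\<integral>t. iexp (x0 \<bullet> \<xi>) * (iexp (t * \<xi>$j) * Gl' t) \<partial>lborel)"
      unfolding G_def Gl'_def ph by (simp add: Ex mult.assoc)
    also have "\<dots> = iexp (x0 \<bullet> \<xi>) * (\<integral>t. iexp (t * \<xi>$j) * Gl' t \<partial>lborel)" by simp
    also have "\<dots> = iexp (x0 \<bullet> \<xi>) * (- \<i> * of_real (\<xi>$j) * (\<integral>t. iexp (t * \<xi>$j) * Gl t \<partial>lborel))"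
      by (subst ibp1[OF DGl cGl' iGl iGl' lim]) rule
    also have "\<dots> = - \<i> * of_real (\<xi>$j) * (\<integral>t. iexp (x0 \<bullet> \<xi>) * (iexp (t * \<xi>$j) * Gl t) \<partial>lborel)"
      by simp
    also have "(\<integral>t. iexp (x0 \<bullet> \<xi>) * (iexp (t * \<xi>$j) * Gl t) \<partial>lborel) = (\<integral>t. F (E (t, p)) \<partial>lborel)"
      unfolding F_def Gl_def ph by (simp add: Ex mult.assoc)
    finally show ?thesis .
  qed
  show ?thesis unfolding fG fF line by simp
qed

lemma pdiffs_append: "pdiffs (xs @ ys) u = pdiffs xs (pdiffs ys u)"
  by (induction xs) auto

lemma schwartz_D:
  assumes "schwartz u"
  shows "((\<lambda>s. pdiffs js u (x + s *\<^sub>R axis j 1)) has_vector_derivative pdiffs (j # js) u (x + t *\<^sub>R axis j 1)) (at t)"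
proof -
  define y where "y = x + t *\<^sub>R axis j 1"
  define \<phi> where "\<phi> h = pdiffs js u (y + h *\<^sub>R axis j 1)" for h
  have "\<phi> differentiable (at 0)" using assms unfolding schwartz_def \<phi>_def by blast
  then have vd: "(\<phi> has_vector_derivative vector_derivative \<phi> (at 0)) (at 0)"
    by (simp add: vector_derivative_works)
  have eqv: "vector_derivative \<phi> (at 0) = pdiffs (j # js) u y"
    by (simp add: pdiff_def \<phi>_def[abs_def])
  have d0: "(\<phi> has_vector_derivative pdiffs (j # js) u y) (at 0)" using vd unfolding eqv .
  have dl: "((\<lambda>s. s - t) has_vector_derivative 1) (at t)"
    using has_vector_derivative_diff[OF has_vector_derivative_id has_vector_derivative_const[of t]] by simp
  have "((\<phi> \<circ> (\<lambda>s. s - t)) has_vector_derivative (1 *\<^sub>R pdiffs (j # js) u y)) (at t)"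
    by (rule vector_diff_chain_at[OF dl]) (use d0 in simp)
  moreover have "\<phi> \<circ> (\<lambda>s. s - t) = (\<lambda>s. pdiffs js u (x + s *\<^sub>R axis j 1))"
    by (rule ext) (simp add: \<phi>_def y_def algebra_simps)
  ultimately show ?thesis by (simp add: y_def)
qed

lemma schwartz_cont: "schwartz u \<Longrightarrow> continuous_on UNIV (pdiffs js u)"
  unfolding schwartz_def by blast

lemma schwartz_meas: "schwartz u \<Longrightarrow> pdiffs js u \<in> borel_measurable borel"
  using schwartz_cont by (rule borel_measurable_continuous_onI)

lemma schwartz_bound: "schwartz u \<Longrightarrow> \<exists>C. \<forall>x. (1 + norm x)^N * norm (pdiffs js u x) \<le> C"
  unfolding schwartz_def by blast

lemma schwartz_ibp:
  assumes "schwartz u"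
  shows "fourier (pdiffs (j # js) u) \<xi> = - \<i> * of_real (\<xi>$j) * fourier (pdiffs js u) \<xi>"
proof -
  obtain C1 where C1: "\<And>x. (1 + norm x)^6 * norm (pdiffs js u x) \<le> C1"
    using schwartz_bound[OF assms] by blast
  obtain C2 where C2: "\<And>x. (1 + norm x)^6 * norm (pdiffs (j # js) u x) \<le> C2"
    using schwartz_bound[OF assms] by blast
  show ?thesis
  proof (rule ibp3[where C = "max C1 C2"])
    show "\<And>x. (1 + norm x)^6 * norm (pdiffs js u x) \<le> max C1 C2" using C1 by (smt (verit))
    show "\<And>x. (1 + norm x)^6 * norm (pdiffs (j # js) u x) \<le> max C1 C2" using C2 by (smt (verit))
  qed (use schwartz_D[OF assms] schwartz_cont[OF assms] schwartz_cont[OF assms, of "j # js"] in auto)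
qed

lemma schwartz_ibp':
  assumes "schwartz u"
  shows "fourier (pdiff j (pdiffs js u)) \<xi> = - \<i> * of_real (\<xi>$j) * fourier (pdiffs js u) \<xi>"
  using schwartz_ibp[OF assms, of j js \<xi>] by simp

lemma schwartz_ibp_list:
  assumes "schwartz u"
  shows "fourier (pdiffs js u) \<xi> = prod_list (map (\<lambda>j. - \<i> * of_real (\<xi>$j)) js) * fourier u \<xi>"
  by (induction js) (auto simp: schwartz_ibp'[OF assms] mult_ac)

lemma norm_fourier_le:
  fixes f :: "R3 \<Rightarrow> complex"
  shows "norm (fourier f \<xi>) \<le> (\<integral>x. norm (f x) \<partial>lborel)"
proof -
  have "norm (fourier f \<xi>) \<le> (\<integral>x. norm (iexp (x \<bullet> \<xi>) * f x) \<partial>lborel)"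
    unfolding fourier_def by (rule integral_norm_bound)
  also have "\<dots> = (\<integral>x. norm (f x) \<partial>lborel)" by (simp add: norm_mult)
  finally show ?thesis .
qed

lemma schwartz_fourier_list_bound:
  assumes "schwartz u"
  shows "norm (prod_list (map (\<lambda>j. - \<i> * of_real (\<xi>$j)) js)) * norm (fourier u \<xi>) \<le> (\<integral>x. norm (pdiffs js u x) \<partial>lborel)"
  using norm_fourier_le[of "pdiffs js u" \<xi>] schwartz_ibp_list[OF assms, of js \<xi>] by (simp add: norm_mult)

lemma schwartz_integrable:
  assumes "schwartz u"
  shows "integrable lborel (pdiffs js u)"
proof -
  obtain C where C: "\<And>x. (1 + norm x)^6 * norm (pdiffs js u x) \<le> C"
    using schwartz_bound[OF assms] by blast
  show ?thesis by (rule decay_integrable[OF schwartz_meas[OF assms] C])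
qed

lemma fourier_meas:
  fixes f :: "R3 \<Rightarrow> complex"
  assumes [measurable]: "f \<in> borel_measurable borel"
  shows "fourier f \<in> borel_measurable borel"
proof -
  have "(\<lambda>(\<xi>, x). iexp (x \<bullet> \<xi>) * f x) \<in> borel_measurable (borel \<Otimes>\<^sub>M lborel)"
    by measurable
  then have "(\<lambda>\<xi>. \<integral>x. iexp (x \<bullet> \<xi>) * f x \<partial>lborel) \<in> borel_measurable borel"
    by (rule lborel.borel_measurable_lebesgue_integral)
  then show ?thesis unfolding fourier_def[abs_def] .
qed

lemma fourier_schwartz_bound:
  assumes "schwartz u"
  shows "\<exists>K. \<forall>\<xi>. norm (fourier u \<xi>) \<le> K * w3 \<xi>"
proof -
  define N where "N js = (\<integral>x. norm (pdiffs js u x) \<partial>lborel)" for js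
  define K where "K = N [] + N [1,1] + N [2,2] + N [3,3] + N [1,1,2,2] + N [1,1,3,3] + N [2,2,3,3] + N [1,1,2,2,3,3]"
  have B: "norm (prod_list (map (\<lambda>j. - \<i> * of_real (\<xi>$j)) js)) * norm (fourier u \<xi>) \<le> N js" for js \<xi>
    unfolding N_def by (rule schwartz_fourier_list_bound[OF assms])
  show ?thesis
  proof (intro exI allI)
    fix \<xi> :: R3
    define a where "a = (\<xi>$1)^2" define b where "b = (\<xi>$2)^2" define c where "c = (\<xi>$3)^2"
    define F where "F = norm (fourier u \<xi>)"
    have nq: "norm (- \<i> * complex_of_real (\<xi>$j)) = \<bar>\<xi>$j\<bar>" for j by (simp add: norm_mult)
    have sq: "\<bar>\<xi>$j\<bar> * \<bar>\<xi>$j\<bar> = (\<xi>$j)^2" for j by (simp add: power2_eq_square abs_mult_self_eq)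
    have b0: "F \<le> N []" using B[where js="[]" and \<xi>=\<xi>] by (simp add: power2_eq_square F_def)
    have b1: "a * F \<le> N [1,1]" using B[where js="[1,1]" and \<xi>=\<xi>] by (simp add: power2_eq_square F_def a_def norm_mult nq sq)
    have b2: "b * F \<le> N [2,2]" using B[where js="[2,2]" and \<xi>=\<xi>] by (simp add: power2_eq_square F_def b_def norm_mult nq sq)
    have b3: "c * F \<le> N [3,3]" using B[where js="[3,3]" and \<xi>=\<xi>] by (simp add: power2_eq_square F_def c_def norm_mult nq sq)
    have b12: "a * b * F \<le> N [1,1,2,2]" using B[where js="[1,1,2,2]" and \<xi>=\<xi>] by (simp add: power2_eq_square F_def a_def b_def norm_mult nq sq mult_ac)
    have b13: "a * c * F \<le> N [1,1,3,3]" using B[where js="[1,1,3,3]" and \<xi>=\<xi>] by (simp add: power2_eq_square F_def a_def c_def norm_mult nq sq mult_ac)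
    have b23: "b * c * F \<le> N [2,2,3,3]" using B[where js="[2,2,3,3]" and \<xi>=\<xi>] by (simp add: power2_eq_square F_def b_def c_def norm_mult nq sq mult_ac)
    have b123: "a * b * c * F \<le> N [1,1,2,2,3,3]" using B[where js="[1,1,2,2,3,3]" and \<xi>=\<xi>] by (simp add: power2_eq_square F_def a_def b_def c_def norm_mult nq sq mult_ac)
    have "(1 + a) * (1 + b) * (1 + c) * F = F + a*F + b*F + c*F + a*b*F + a*c*F + b*c*F + a*b*c*F"
      by (simp add: algebra_simps)
    also have "\<dots> \<le> K" unfolding K_def using b0 b1 b2 b3 b12 b13 b23 b123 by linarith
    finally have le: "(1 + a) * (1 + b) * (1 + c) * F \<le> K" .
    have pos: "(1 + a) * (1 + b) * (1 + c) > 0" unfolding a_def b_def c_def by (intro mult_pos_pos add_pos_nonneg) auto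
    have w: "w3 \<xi> = inverse ((1 + a) * (1 + b) * (1 + c))"
      by (simp add: w3_def r1_def a_def b_def c_def mult_ac)
    have "F = ((1 + a) * (1 + b) * (1 + c) * F) * w3 \<xi>"
      unfolding w using pos by (simp add: field_simps)
    also have "\<dots> \<le> K * w3 \<xi>" using le w3_pos[of \<xi>] by (intro mult_right_mono) auto
    finally show "norm (fourier u \<xi>) \<le> K * w3 \<xi>" by (simp add: F_def)
  qed
qed

lemma fourier_schwartz_integrable:
  assumes "schwartz u"
  shows "integrable lborel (fourier u)"
proof -
  obtain K where K: "\<And>\<xi>. norm (fourier u \<xi>) \<le> K * w3 \<xi>" using fourier_schwartz_bound[OF assms] by blast
  show ?thesis
  proof (rule Bochner_Integration.integrable_bound[of _ "\<lambda>x. K * w3 x"])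
    show "integrable lborel (\<lambda>x. K * w3 x)" using integrable_w3 by simp
    show "fourier u \<in> borel_measurable lborel" using fourier_meas[OF schwartz_meas[OF assms, of "[]"]] by simp
    show "AE x in lborel. norm (fourier u x) \<le> norm (K * w3 x)"
    proof (intro AE_I2)
      fix x show "norm (fourier u x) \<le> norm (K * w3 x)"
        using K[of x] abs_ge_self[of "K * w3 x"] by simp
    qed
  qed
qed

definition g1 :: "real \<Rightarrow> real" where "g1 s = exp (- (s^2) / 2)"

lemma g1_meas[measurable]: "g1 \<in> borel_measurable borel" unfolding g1_def by measurable

lemma g1_pos: "g1 s > 0" unfolding g1_def by simp

lemma g1_le1: "g1 s \<le> 1" unfolding g1_def by simp

lemma integrable_g1: "integrable lborel g1"
proof -
  have "integrable lborel (\<lambda>x. std_normal_density x * x^0)" by (rule integrable_std_normal_moment)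
  then have "integrable lborel (\<lambda>x. sqrt (2*pi) * std_normal_density x)" by simp
  moreover have "(\<lambda>x. sqrt (2*pi) * std_normal_density x) = g1"
    by (rule ext) (simp add: std_normal_density_def g1_def)
  ultimately show ?thesis by simp
qed

lemma gauss1: "(\<integral>x. complex_of_real (g1 x) * iexp (t * x) \<partial>lborel) = complex_of_real (sqrt (2*pi) * g1 t)"
proof -
  have "complex_of_real (exp (- (t^2) / 2)) = char std_normal_distribution t"
    by (simp add: char_std_normal_distribution)
  also have "\<dots> = (\<integral>x. std_normal_density x *\<^sub>R iexp (t * x) \<partial>lborel)"
    unfolding char_def by (rule integral_density) (auto simp: normal_density_nonneg)
  finally have *: "(\<integral>x. std_normal_density x *\<^sub>R iexp (t * x) \<partial>lborel) = complex_of_real (g1 t)"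
    by (simp add: g1_def)
  have "(\<integral>x. complex_of_real (g1 x) * iexp (t * x) \<partial>lborel)
      = (\<integral>x. complex_of_real (sqrt (2*pi)) * (std_normal_density x *\<^sub>R iexp (t * x)) \<partial>lborel)"
    by (rule Bochner_Integration.integral_cong) (auto simp: g1_def std_normal_density_def scaleR_conv_of_real)
  also have "\<dots> = complex_of_real (sqrt (2*pi)) * complex_of_real (g1 t)"
    by (subst integral_mult_right_zero) (simp only: *)
  finally show ?thesis by simp
qed

lemma integrable_prod_mult_c:
  fixes f :: "'a::euclidean_space \<Rightarrow> complex" and g :: "'b::euclidean_space \<Rightarrow> complex"
  assumes f: "integrable lborel f" and g: "integrable lborel g"
  shows "integrable (lborel \<Otimes>\<^sub>M lborel) (\<lambda>p. f (fst p) * g (snd p))"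
proof (rule lborel_pair.Fubini_integrable)
  show "(\<lambda>p. f (fst p) * g (snd p)) \<in> borel_measurable (lborel \<Otimes>\<^sub>M lborel)"
    using f g by measurable
  have "(\<lambda>x. \<integral>y. norm (f (fst (x, y)) * g (snd (x, y))) \<partial>lborel) = (\<lambda>x. norm (f x) * (\<integral>y. norm (g y) \<partial>lborel))"
    by (simp add: norm_mult)
  then show "integrable lborel (\<lambda>x. \<integral>y. norm (f (fst (x, y)) * g (snd (x, y))) \<partial>lborel)"
    using f by simp
  show "AE x in lborel. integrable lborel (\<lambda>y. f (fst (x, y)) * g (snd (x, y)))"
    using g by simp
qed

lemma integral_prod_mult_c:
  fixes f :: "'a::euclidean_space \<Rightarrow> complex" and g :: "'b::euclidean_space \<Rightarrow> complex"
  assumes f: "integrable lborel f" and g: "integrable lborel g"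
  shows "(\<integral>p. f (fst p) * g (snd p) \<partial>(lborel \<Otimes>\<^sub>M lborel)) = integral\<^sup>L lborel f * integral\<^sup>L lborel g"
proof -
  have "(\<integral>p. f (fst p) * g (snd p) \<partial>(lborel \<Otimes>\<^sub>M lborel)) = (\<integral>x. (\<integral>y. f (fst (x,y)) * g (snd (x,y)) \<partial>lborel) \<partial>lborel)"
    using lborel_pair.integral_fst'[OF integrable_prod_mult_c[OF f g]] by simp
  also have "\<dots> = (\<integral>x. f x * integral\<^sup>L lborel g \<partial>lborel)" by simp
  also have "\<dots> = integral\<^sup>L lborel f * integral\<^sup>L lborel g" by simp
  finally show ?thesis .
qed

definition G3 :: "R3 \<Rightarrow> real" where "G3 x = exp (- ((norm x)^2) / 2)"

lemma G3_alt: "G3 x = g1 (x$1) * g1 (x$2) * g1 (x$3)"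
proof -
  have "(norm x)^2 = x \<bullet> x" by (simp add: power2_norm_eq_inner)
  then have "(norm x)^2 = (x$1)^2 + (x$2)^2 + (x$3)^2" by (simp add: inner3 power2_eq_square)
  then show ?thesis by (simp add: G3_def g1_def exp_add[symmetric] add_divide_distrib diff_divide_distrib)
qed

lemma G3_meas[measurable]: "G3 \<in> borel_measurable borel" unfolding G3_def by measurable

lemma G3_pos: "G3 x > 0" unfolding G3_def by simp
lemma G3_le1: "G3 x \<le> 1" unfolding G3_def by simp

lemma gauss3: "(\<integral>\<xi>. complex_of_real (G3 \<xi>) * iexp (z \<bullet> \<xi>) \<partial>lborel) = complex_of_real (sqrt (2*pi)^3 * G3 z)"
proof -
  define h where "h k s = complex_of_real (g1 s) * iexp (z$k * s)" for k s
  have ih: "integrable lborel (h k)" for k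
  proof (rule Bochner_Integration.integrable_bound[of _ "\<lambda>s. g1 s"])
    show "integrable lborel g1" by (rule integrable_g1)
    show "h k \<in> borel_measurable lborel" unfolding h_def by measurable
  qed (auto simp: h_def norm_mult intro!: AE_I2 less_imp_le[OF g1_pos])
  have Ih: "integral\<^sup>L lborel (h k) = complex_of_real (sqrt (2*pi) * g1 (z$k))" for k
    unfolding h_def using gauss1 by simp
  have m: "(\<lambda>\<xi>. complex_of_real (G3 \<xi>) * iexp (z \<bullet> \<xi>)) \<in> borel_measurable borel" by measurable
  have "(\<integral>\<xi>. complex_of_real (G3 \<xi>) * iexp (z \<bullet> \<xi>) \<partial>lborel) = (\<integral>p. complex_of_real (G3 (E1 p)) * iexp (z \<bullet> E1 p) \<partial>lborel)"
    by (rule integral_E[OF E_meas(1) lborel_E1 m])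
  also have "\<dots> = (\<integral>p. h 1 (fst p) * (h 2 (fst (snd p)) * h 3 (snd (snd p))) \<partial>(lborel \<Otimes>\<^sub>M (lborel \<Otimes>\<^sub>M lborel)))"
  proof -
    have pt: "complex_of_real (G3 (E1 p)) * iexp (z \<bullet> E1 p) = h 1 (fst p) * (h 2 (fst (snd p)) * h 3 (snd (snd p)))" for p
    proof -
      have "z \<bullet> E1 p = z$1 * fst p + z$2 * fst (snd p) + z$3 * snd (snd p)"
        by (simp add: E1_def split_beta inner3)
      then have e: "iexp (z \<bullet> E1 p) = iexp (z$1 * fst p) * iexp (z$2 * fst (snd p)) * iexp (z$3 * snd (snd p))"
        by (simp only: iexp_add)
      have g: "G3 (E1 p) = g1 (fst p) * g1 (fst (snd p)) * g1 (snd (snd p))"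
        by (simp add: G3_alt E1_def split_beta)
      show ?thesis unfolding e g h_def by (simp only: of_real_mult mult_ac)
    qed
    show ?thesis unfolding pt by (simp add: lborel_prod)
  qed
  also have "\<dots> = integral\<^sup>L lborel (h 1) * (\<integral>q. h 2 (fst q) * h 3 (snd q) \<partial>(lborel \<Otimes>\<^sub>M lborel))"
    using integral_prod_mult_c[OF ih integrable_prod_mult_c[OF ih ih, unfolded lborel_prod], of 1 2 3]
    by (simp add: lborel_prod)
  also have "\<dots> = integral\<^sup>L lborel (h 1) * (integral\<^sup>L lborel (h 2) * integral\<^sup>L lborel (h 3))"
    using integral_prod_mult_c[OF ih ih, of 2 3] by simp
  also have "\<dots> = complex_of_real (sqrt (2*pi)^3 * G3 z)"
    unfolding Ih G3_alt by (simp only: of_real_mult power3_eq_cube mult_ac)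
  finally show ?thesis .
qed

lemma DIM_R3: "DIM(R3) = 3" by simp

lemma nn_integral_affine3:
  fixes f :: "R3 \<Rightarrow> ennreal" and c :: real
  assumes [measurable]: "f \<in> borel_measurable borel" and c: "c \<noteq> 0"
  shows "(\<integral>\<^sup>+x. f x \<partial>lborel) = ennreal (\<bar>c\<bar>^3) * (\<integral>\<^sup>+x. f (t + c *\<^sub>R x) \<partial>lborel)"
  by (subst lborel_affine[OF c, of t]) (simp add: nn_integral_density nn_integral_distr nn_integral_cmult)

lemma lborel_integrable_affine3:
  fixes f :: "R3 \<Rightarrow> 'a :: {banach, second_countable_topology}"
  assumes f: "integrable lborel f" and c: "c \<noteq> 0"
  shows "integrable lborel (\<lambda>x. f (t + c *\<^sub>R x))"
  using f f[THEN borel_measurable_integrable] c unfolding integrable_iff_bounded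
  by (subst (asm) nn_integral_affine3[where c=c and t=t]) (auto simp: ennreal_mult_less_top)

lemma lborel_integrable_affine3_iff:
  fixes f :: "R3 \<Rightarrow> 'a :: {banach, second_countable_topology}"
  assumes c: "c \<noteq> 0"
  shows "integrable lborel (\<lambda>x. f (t + c *\<^sub>R x)) \<longleftrightarrow> integrable lborel f"
proof
  assume "integrable lborel (\<lambda>x. f (t + c *\<^sub>R x))"
  from lborel_integrable_affine3[OF this, of "1/c" "- t /\<^sub>R c"] c show "integrable lborel f"
    by (simp add: algebra_simps)
qed (use lborel_integrable_affine3 c in auto)

lemma lborel_integral_affine3:
  fixes f :: "R3 \<Rightarrow> 'a :: {banach, second_countable_topology}" and c :: real
  assumes c: "c \<noteq> 0"
  shows "(\<integral>x. f x \<partial>lborel) = \<bar>c\<bar>^3 *\<^sub>R (\<integral>x. f (t + c *\<^sub>R x) \<partial>lborel)"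
proof cases
  assume f[measurable]: "integrable lborel f" then show ?thesis
    using c f f[THEN borel_measurable_integrable] f[THEN lborel_integrable_affine3, of c t]
    by (subst lborel_affine[OF c, of t]) (simp add: integral_density integral_distr)
next
  assume "\<not> integrable lborel f" with c show ?thesis
    by (simp add: lborel_integrable_affine3_iff not_integrable_integral_eq)
qed

lemma dc_right0:
  fixes s :: "real \<Rightarrow> 'a \<Rightarrow> 'b::{banach, second_countable_topology}" and w :: "'a \<Rightarrow> real"
  assumes "f \<in> borel_measurable M" "\<And>e. s e \<in> borel_measurable M" "integrable M w"
    and lim: "\<And>x. x \<in> space M \<Longrightarrow> ((\<lambda>e. s e x) \<longlongrightarrow> f x) (at_right 0)"
    and bound: "\<And>e x. e > 0 \<Longrightarrow> x \<in> space M \<Longrightarrow> norm (s e x) \<le> w x"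
  shows "((\<lambda>e. integral\<^sup>L M (s e)) \<longlongrightarrow> integral\<^sup>L M f) (at_right 0)"
  unfolding filterlim_at_right_to_top
proof (rule integral_dominated_convergence_at_top[where w=w])
  show "AE x in M. ((\<lambda>i. s (inverse i) x) \<longlongrightarrow> f x) at_top"
  proof (intro AE_I2)
    fix x assume "x \<in> space M"
    from lim[OF this] show "((\<lambda>i. s (inverse i) x) \<longlongrightarrow> f x) at_top"
      by (subst (asm) filterlim_at_right_to_top) simp
  qed
  show "\<forall>\<^sub>F i in at_top. AE x in M. norm (s (inverse i) x) \<le> w x"
    using eventually_gt_at_top[of 0] by eventually_elim (auto intro!: AE_I2 bound)
qed (use assms in auto)

lemma integrable_G3: "integrable lborel G3"
proof -
  have "integrable (lborel \<Otimes>\<^sub>M lborel) (\<lambda>p. g1 (fst p) * (g1 (fst (snd p)) * g1 (snd (snd p))))"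
    using integrable_prod_mult[OF integrable_g1 integrable_prod_mult[OF integrable_g1 integrable_g1, unfolded lborel_prod]]
    by (simp add: lborel_prod)
  then have "integrable lborel (\<lambda>p. G3 (E1 p))"
    by (simp add: lborel_prod3 G3_alt E1_def split_beta mult.assoc)
  then show ?thesis using integrable_E[OF _ lborel_E1, of G3] by simp
qed

lemma G3_scale_integrable:
  assumes "c \<noteq> 0"
  shows "integrable lborel (\<lambda>x. G3 (t + c *\<^sub>R x))"
  using lborel_integrable_affine3[OF integrable_G3 assms] .

lemma G3_zero [simp]: "G3 0 = 1" by (simp add: G3_def)

lemma integral_G3: "(\<integral>\<xi>. complex_of_real (G3 \<xi>) \<partial>lborel) = complex_of_real (sqrt (2*pi)^3)"
  using gauss3[of 0] by simp

lemma cont_G3: "continuous_on UNIV G3"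
  unfolding G3_def by (intro continuous_intros) auto

lemma iexp_diff_inner: "iexp (- (x \<bullet> \<xi>)) * iexp (y \<bullet> \<xi>) = iexp ((y - x) \<bullet> \<xi>)"
proof -
  have "(y - x) \<bullet> \<xi> = - (x \<bullet> \<xi>) + y \<bullet> \<xi>" by (simp add: inner_diff_left)
  then show ?thesis by (simp only: iexp_add)
qed

lemma gauss3_scaled:
  assumes c: "c > 0"
  shows "(\<integral>\<xi>. complex_of_real (G3 (c *\<^sub>R \<xi>)) * iexp (v \<bullet> \<xi>) \<partial>lborel)
       = complex_of_real ((1/c)^3 * sqrt (2*pi)^3 * G3 ((1/c) *\<^sub>R v))"
proof -
  have "(\<integral>\<xi>. complex_of_real (G3 (c *\<^sub>R \<xi>)) * iexp (v \<bullet> \<xi>) \<partial>lborel)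
      = \<bar>1/c\<bar>^3 *\<^sub>R (\<integral>\<zeta>. complex_of_real (G3 (c *\<^sub>R (0 + (1/c) *\<^sub>R \<zeta>))) * iexp (v \<bullet> (0 + (1/c) *\<^sub>R \<zeta>)) \<partial>lborel)"
    using c by (intro lborel_integral_affine3) simp
  also have "(\<lambda>\<zeta>. complex_of_real (G3 (c *\<^sub>R (0 + (1/c) *\<^sub>R \<zeta>))) * iexp (v \<bullet> (0 + (1/c) *\<^sub>R \<zeta>)))
      = (\<lambda>\<zeta>. complex_of_real (G3 \<zeta>) * iexp (((1/c) *\<^sub>R v) \<bullet> \<zeta>))"
    using c by (intro ext) (simp add: inner_commute)
  also have "(\<integral>\<zeta>. complex_of_real (G3 \<zeta>) * iexp (((1/c) *\<^sub>R v) \<bullet> \<zeta>) \<partial>lborel) = complex_of_real (sqrt (2*pi)^3 * G3 ((1/c) *\<^sub>R v))"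
    by (rule gauss3)
  finally show ?thesis using c by (simp add: scaleR_conv_of_real)
qed

theorem fourier_inversion:
  assumes su: "schwartz u"
  shows "fourier_inv (fourier u) x = u x"
proof -
  have cu: "continuous_on UNIV u" using schwartz_cont[OF su, of "[]"] by simp
  have mu[measurable]: "u \<in> borel_measurable borel" using cu by (rule borel_measurable_continuous_onI)
  obtain M where M: "\<And>x. norm (u x) \<le> M" using schwartz_bound[OF su, of 0 "[]"] by auto
  have iu: "integrable lborel u" using schwartz_integrable[OF su, of "[]"] by simp
  define U where "U = fourier u"
  have iU: "integrable lborel U" using fourier_schwartz_integrable[OF su] by (simp add: U_def)
  have mU[measurable]: "U \<in> borel_measurable borel" using fourier_meas[OF mu] by (simp add: U_def)
  define s3 where "s3 = complex_of_real (sqrt (2*pi)^3)"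
  define J where "J e = (\<integral>\<xi>. iexp (-(x \<bullet> \<xi>)) * (complex_of_real (G3 (sqrt e *\<^sub>R \<xi>)) * U \<xi>) \<partial>lborel)" for e
  define L where "L = (\<integral>\<xi>. iexp (-(x \<bullet> \<xi>)) * U \<xi> \<partial>lborel)"
  have lim1: "(J \<longlongrightarrow> L) (at_right 0)"
    unfolding J_def[abs_def] L_def
  proof (rule dc_right0[where w = "\<lambda>\<xi>. norm (U \<xi>)"])
    show "integrable lborel (\<lambda>\<xi>. norm (U \<xi>))" using iU by simp
    fix \<xi> :: R3
    have isG3: "isCont G3 z" for z using cont_G3 by (simp add: continuous_on_eq_continuous_at)
    have "((\<lambda>e. G3 (sqrt e *\<^sub>R \<xi>)) \<longlongrightarrow> G3 (sqrt 0 *\<^sub>R \<xi>)) (at_right 0)"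
      by (rule isCont_tendsto_compose[OF isG3]) (intro tendsto_intros)
    then show "((\<lambda>e. iexp (-(x \<bullet> \<xi>)) * (complex_of_real (G3 (sqrt e *\<^sub>R \<xi>)) * U \<xi>)) \<longlongrightarrow> iexp (-(x \<bullet> \<xi>)) * U \<xi>) (at_right 0)"
      by (auto intro!: tendsto_eq_intros)
    fix e :: real
    show "norm (iexp (-(x \<bullet> \<xi>)) * (complex_of_real (G3 (sqrt e *\<^sub>R \<xi>)) * U \<xi>)) \<le> norm (U \<xi>)"
      using G3_le1[of "sqrt e *\<^sub>R \<xi>"] G3_pos[of "sqrt e *\<^sub>R \<xi>"]
      by (simp add: norm_mult mult_left_le_one_le)
  qed simp_all
  have Jeq: "J e = s3 * (\<integral>w. u (x + sqrt e *\<^sub>R w) * complex_of_real (G3 w) \<partial>lborel)" if e: "e > 0" for e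
  proof -
    define c where "c = sqrt e"
    have c: "c > 0" using e by (simp add: c_def)
    define K where "K \<xi> y = iexp (-(x \<bullet> \<xi>)) * complex_of_real (G3 (c *\<^sub>R \<xi>)) * (iexp (y \<bullet> \<xi>) * u y)" for \<xi> y
    have iK: "integrable (lborel \<Otimes>\<^sub>M lborel) (\<lambda>(\<xi>, y). K \<xi> y)"
    proof (rule Bochner_Integration.integrable_bound)
      show "integrable (lborel \<Otimes>\<^sub>M lborel) (\<lambda>p. G3 (0 + c *\<^sub>R fst p) * norm (u (snd p)))"
        using integrable_prod_mult[OF G3_scale_integrable[of c 0] integrable_norm[OF iu]] c by simp
      show "(\<lambda>(\<xi>, y). K \<xi> y) \<in> borel_measurable (lborel \<Otimes>\<^sub>M lborel)"
        unfolding K_def by measurable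
      show "AE p in lborel \<Otimes>\<^sub>M lborel. norm (case p of (\<xi>, y) \<Rightarrow> K \<xi> y) \<le> norm (G3 (0 + c *\<^sub>R fst p) * norm (u (snd p)))"
        by (intro AE_I2) (auto simp: K_def norm_mult less_imp_le[OF G3_pos])
    qed
    have "J e = (\<integral>\<xi>. (\<integral>y. K \<xi> y \<partial>lborel) \<partial>lborel)"
      unfolding J_def c_def[symmetric]
    proof (rule Bochner_Integration.integral_cong[OF refl])
      fix \<xi> :: R3
      have "U \<xi> = (\<integral>y. iexp (y \<bullet> \<xi>) * u y \<partial>lborel)" by (simp add: U_def fourier_def)
      then show "iexp (-(x \<bullet> \<xi>)) * (complex_of_real (G3 (c *\<^sub>R \<xi>)) * U \<xi>) = (\<integral>y. K \<xi> y \<partial>lborel)"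
        by (simp add: K_def mult.assoc)
    qed
    also have "\<dots> = (\<integral>y. (\<integral>\<xi>. K \<xi> y \<partial>lborel) \<partial>lborel)"
      using lborel_pair.Fubini_integral[OF iK] by simp
    also have "\<dots> = (\<integral>y. u y * complex_of_real ((1/c)^3 * sqrt (2*pi)^3 * G3 ((1/c) *\<^sub>R (y - x))) \<partial>lborel)"
    proof (rule Bochner_Integration.integral_cong[OF refl])
      fix y :: R3
      have "(\<integral>\<xi>. K \<xi> y \<partial>lborel) = (\<integral>\<xi>. u y * (complex_of_real (G3 (c *\<^sub>R \<xi>)) * iexp ((y - x) \<bullet> \<xi>)) \<partial>lborel)"
        by (rule Bochner_Integration.integral_cong[OF refl])
           (simp add: K_def iexp_diff_inner[symmetric] mult_ac)
      also have "\<dots> = u y * (\<integral>\<xi>. complex_of_real (G3 (c *\<^sub>R \<xi>)) * iexp ((y - x) \<bullet> \<xi>) \<partial>lborel)"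
        by simp
      also have "\<dots> = u y * complex_of_real ((1/c)^3 * sqrt (2*pi)^3 * G3 ((1/c) *\<^sub>R (y - x)))"
        by (simp only: gauss3_scaled[OF c])
      finally show "(\<integral>\<xi>. K \<xi> y \<partial>lborel) = u y * complex_of_real ((1/c)^3 * sqrt (2*pi)^3 * G3 ((1/c) *\<^sub>R (y - x)))" .
    qed
    also have "\<dots> = \<bar>c\<bar>^3 *\<^sub>R (\<integral>w. u (x + c *\<^sub>R w) * complex_of_real ((1/c)^3 * sqrt (2*pi)^3 * G3 ((1/c) *\<^sub>R ((x + c *\<^sub>R w) - x))) \<partial>lborel)"
      using c by (intro lborel_integral_affine3) simp
    also have "(\<lambda>w. u (x + c *\<^sub>R w) * complex_of_real ((1/c)^3 * sqrt (2*pi)^3 * G3 ((1/c) *\<^sub>R ((x + c *\<^sub>R w) - x))))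
        = (\<lambda>w. complex_of_real ((1/c)^3) * (s3 * (u (x + c *\<^sub>R w) * complex_of_real (G3 w))))"
      using c by (intro ext) (simp add: s3_def mult_ac)
    also have "\<bar>c\<bar>^3 *\<^sub>R (\<integral>w. complex_of_real ((1/c)^3) * (s3 * (u (x + c *\<^sub>R w) * complex_of_real (G3 w))) \<partial>lborel)
        = s3 * (\<integral>w. u (x + c *\<^sub>R w) * complex_of_real (G3 w) \<partial>lborel)"
      using c by (simp add: scaleR_conv_of_real power_divide)
    finally show ?thesis by (simp add: c_def)
  qed
  have lim2: "((\<lambda>e. \<integral>w. u (x + sqrt e *\<^sub>R w) * complex_of_real (G3 w) \<partial>lborel) \<longlongrightarrow> (\<integral>w. u x * complex_of_real (G3 w) \<partial>lborel)) (at_right 0)"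
  proof (rule dc_right0[where w = "\<lambda>w. M * G3 w"])
    show "integrable lborel (\<lambda>w. M * G3 w)" using integrable_G3 by simp
    fix w :: R3
    have "((\<lambda>e. x + sqrt e *\<^sub>R w) \<longlongrightarrow> x + sqrt 0 *\<^sub>R w) (at_right 0)"
      by (intro tendsto_intros)
    then have "((\<lambda>e. u (x + sqrt e *\<^sub>R w)) \<longlongrightarrow> u x) (at_right 0)"
      using cu by (auto intro: isCont_tendsto_compose simp: continuous_on_eq_continuous_at)
    then show "((\<lambda>e. u (x + sqrt e *\<^sub>R w) * complex_of_real (G3 w)) \<longlongrightarrow> u x * complex_of_real (G3 w)) (at_right 0)"
      by (auto intro!: tendsto_eq_intros)
    fix e :: real
    show "norm (u (x + sqrt e *\<^sub>R w) * complex_of_real (G3 w)) \<le> M * G3 w"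
      using M[of "x + sqrt e *\<^sub>R w"] G3_pos[of w] by (simp add: norm_mult mult_right_mono)
  qed simp_all
  have eqI: "(\<integral>w. u x * complex_of_real (G3 w) \<partial>lborel) = u x * s3"
    using integral_G3 by (simp add: s3_def)
  have lim2': "((\<lambda>e. s3 * (\<integral>w. u (x + sqrt e *\<^sub>R w) * complex_of_real (G3 w) \<partial>lborel)) \<longlongrightarrow> s3 * (u x * s3)) (at_right 0)"
    using lim2 unfolding eqI by (rule tendsto_mult[OF tendsto_const])
  have ev: "\<forall>\<^sub>F e in at_right 0. s3 * (\<integral>w. u (x + sqrt e *\<^sub>R w) * complex_of_real (G3 w) \<partial>lborel) = J e"
    using eventually_at_right_less[of "0::real"] by eventually_elim (simp add: Jeq)
  have lim3: "(J \<longlongrightarrow> s3 * (u x * s3)) (at_right 0)"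
    by (rule Lim_transform_eventually[OF lim2' ev])
  have L: "L = s3 * (u x * s3)"
    using tendsto_unique[OF trivial_limit_at_right_real lim1 lim3] .
  have ss: "s3 * s3 = complex_of_real ((2*pi)^3)"
    unfolding s3_def of_real_mult[symmetric] by (simp add: power_mult_distrib[symmetric] power_mult[symmetric])
  have pw: "(2*pi) powr (-3) * (2*pi)^3 = 1"
    by (simp add: powr_minus powr_realpow)
  have "fourier_inv U x = complex_of_real ((2 * pi) powr (-3)) * L"
    unfolding fourier_inv_def L_def by simp
  also have "\<dots> = complex_of_real ((2 * pi) powr (-3)) * (s3 * s3) * u x"
    unfolding L by (simp add: mult_ac)
  also have "\<dots> = complex_of_real ((2 * pi) powr (-3) * (2*pi)^3) * u x"
    by (simp only: ss of_real_mult)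
  also have "\<dots> = u x" unfolding pw by simp
  finally show ?thesis by (simp add: U_def)
qed

lemma iexp_minus_diff: "iexp (- y) - iexp y = - 2 * \<i> * complex_of_real (sin y)"
proof -
  have "iexp (- y) = cis (- y)" "iexp y = cis y" by (simp_all add: cis_conv_exp)
  then show ?thesis by (simp add: complex_eq_iff)
qed

lemma Si_zero [simp]: "Si 0 = 0" by (simp add: Si_def zero_ereal_def)

lemma Si_lim:
  "((\<lambda>e. Si (a / e) - Si (a * e)) \<longlongrightarrow> sgn a * (pi / 2)) (at_right 0)"
proof -
  have l2: "((\<lambda>e. Si (a * e)) \<longlongrightarrow> 0) (at_right 0)"
  proof -
    have "((\<lambda>e. a * e) \<longlongrightarrow> a * 0) (at_right 0)" by (intro tendsto_intros)
    then have "((\<lambda>e. Si (a * e)) \<longlongrightarrow> Si (a * 0)) (at_right 0)"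
      by (rule isCont_tendsto_compose[OF isCont_Si])
    then show ?thesis by simp
  qed
  have top: "filterlim (\<lambda>e. b / e) at_top (at_right 0)" if "b > 0" for b :: real
  proof -
    have "filterlim (\<lambda>e. b * inverse e) at_top (at_right 0)"
      by (rule filterlim_tendsto_pos_mult_at_top[OF tendsto_const that filterlim_inverse_at_top_right])
    then show ?thesis by (simp add: divide_inverse)
  qed
  have l1: "((\<lambda>e. Si (a / e)) \<longlongrightarrow> sgn a * (pi / 2)) (at_right 0)"
  proof (cases a "0::real" rule: linorder_cases)
    case less
    have ev: "\<forall>\<^sub>F e in at_right 0. - Si ((- a) / e) = Si (a / e)"
      using eventually_at_right_less[of "0::real"]
    proof eventually_elim
      case (elim e)
      have "Si (- ((- a) / e)) = - Si ((- a) / e)" using less elim by (intro Si_neg) (simp add: divide_nonpos_pos)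
      then show ?case by simp
    qed
    have "((\<lambda>e. - Si ((- a) / e)) \<longlongrightarrow> - (pi / 2)) (at_right 0)"
      using filterlim_compose[OF Si_at_top top[of "- a"]] less by (intro tendsto_minus) simp
    then have "((\<lambda>e. Si (a / e)) \<longlongrightarrow> - (pi / 2)) (at_right 0)"
      by (rule Lim_transform_eventually[OF _ ev])
    then show ?thesis using less by simp
  next
    case equal then show ?thesis by simp
  next
    case greater
    then show ?thesis using filterlim_compose[OF Si_at_top top[of a]] by simp
  qed
  show ?thesis using tendsto_diff[OF l1 l2] by simp
qed

lemma Si_diff_bound: "\<exists>B. \<forall>a e. \<bar>Si (a / e) - Si (a * e)\<bar> \<le> B"
proof -
  obtain B where B: "\<And>T. \<bar>Si T\<bar> \<le> B" using bounded_Si by blast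
  show ?thesis
  proof (intro exI allI)
    fix a e :: real
    show "\<bar>Si (a / e) - Si (a * e)\<bar> \<le> 2 * B" using B[of "a/e"] B[of "a*e"] by linarith
  qed
qed

lemma ftc_sin_over:
  assumes e: "0 < e" "e < 1"
  shows "(\<integral>t. indicator {e<..<1/e} t * (sin (t * a) / t) \<partial>lborel) = Si (a / e) - Si (a * e)"
proof -
  have le: "e \<le> 1 / e" using e by (simp add: field_simps) (smt (verit) mult_le_one)
  have D: "((\<lambda>t. Si (a * t)) has_vector_derivative (a * sinc (a * t))) (at t within X)" for t X
  proof -
    have "((\<lambda>t. Si (a * t)) has_real_derivative (sinc (a * t) * a)) (at t within X)"
      by (rule DERIV_chain2[OF DERIV_Si]) (auto intro!: derivative_eq_intros)
    then show ?thesis by (simp add: has_real_derivative_iff_has_vector_derivative mult.commute)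
  qed
  have c: "continuous_on {min e (1/e)..max e (1/e)} (\<lambda>t. a * sinc (a * t))"
    by (intro continuous_intros)
  have "(LBINT t=e..1/e. a * sinc (a * t)) = Si (a * (1/e)) - Si (a * e)"
    by (rule interval_integral_FTC_finite[OF c D])
  moreover have "(LBINT t=e..1/e. a * sinc (a * t)) = (LBINT t=e..1/e. sin (t * a) / t)"
  proof (rule interval_integral_cong)
    fix t assume "t \<in> einterval (min (ereal e) (ereal (1/e))) (max (ereal e) (ereal (1/e)))"
    then have "t > 0" using e le by (auto simp: einterval_iff min_def max_def)
    then show "a * sinc (a * t) = sin (t * a) / t" by (auto simp: mult.commute)
  qed
  moreover have "(LBINT t=e..1/e. sin (t * a) / t) = (\<integral>t. indicator {e<..<1/e} t * (sin (t * a) / t) \<partial>lborel)"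
    using le by (simp add: interval_integral_Ioo set_lebesgue_integral_def)
  ultimately show ?thesis by simp
qed

lemma k_formula:
  assumes e: "0 < e" "e < 1"
  shows "(\<integral>t. indicator {t. e < \<bar>t\<bar> \<and> \<bar>t\<bar> < 1/e} t *\<^sub>R (iexp (- (t * a)) / complex_of_real t) \<partial>lborel)
       = - 2 * \<i> * complex_of_real (Si (a / e) - Si (a * e))"
proof -
  have le: "e \<le> 1 / e" using e by (simp add: field_simps) (smt (verit) mult_le_one)
  define P where "P = {e<..<1/e}"
  define N where "N = {-(1/e)<..<-e}"
  define h where "h t = iexp (- (t * a)) / complex_of_real t" for t
  have ind: "indicator {t. e < \<bar>t\<bar> \<and> \<bar>t\<bar> < 1/e} t = (indicator P t + indicator N t :: real)" for t
    using e by (auto simp: indicator_def P_def N_def abs_if)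
  have indN: "indicator N (- t) = (indicator P t :: real)" for t
    by (auto simp: indicator_def P_def N_def)
  have ch: "continuous_on {x..y} h" if "0 < x \<or> y < 0" for x y
    unfolding h_def using that by (intro continuous_intros) auto
  have iP: "set_integrable lborel P h"
    by (rule set_integrable_subset[OF borel_integrable_atLeastAtMost'[OF ch[of e "1/e"]]]) (use e in \<open>auto simp: P_def\<close>)
  have iN: "set_integrable lborel N h"
    by (rule set_integrable_subset[OF borel_integrable_atLeastAtMost'[OF ch[of "-(1/e)" "-e"]]]) (use e in \<open>auto simp: N_def\<close>)
  have "(\<integral>t. indicator {t. e < \<bar>t\<bar> \<and> \<bar>t\<bar> < 1/e} t *\<^sub>R h t \<partial>lborel)
      = (\<integral>t. indicator P t *\<^sub>R h t + indicator N t *\<^sub>R h t \<partial>lborel)"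
    by (simp add: ind scaleR_add_left)
  also have "\<dots> = (\<integral>t. indicator P t *\<^sub>R h t \<partial>lborel) + (\<integral>t. indicator N t *\<^sub>R h t \<partial>lborel)"
    using iP iN unfolding set_integrable_def by (rule Bochner_Integration.integral_add)
  also have "(\<integral>t. indicator N t *\<^sub>R h t \<partial>lborel) = (\<integral>t. indicator P t *\<^sub>R h (- t) \<partial>lborel)"
    using lborel_integral_real_affine[of "-1" "\<lambda>t. indicator N t *\<^sub>R h t" 0] by (simp add: indN)
  also have "(\<integral>t. indicator P t *\<^sub>R h t \<partial>lborel) + (\<integral>t. indicator P t *\<^sub>R h (- t) \<partial>lborel)
      = (\<integral>t. indicator P t *\<^sub>R h t + indicator P t *\<^sub>R h (- t) \<partial>lborel)"
  proof (rule Bochner_Integration.integral_add[symmetric])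
    show "integrable lborel (\<lambda>t. indicator P t *\<^sub>R h t)" using iP unfolding set_integrable_def .
    have "integrable lborel (\<lambda>t. indicator N (0 + (-1) * t) *\<^sub>R h (0 + (-1) * t))"
      using iN unfolding set_integrable_def by (intro lborel_integrable_real_affine) auto
    then show "integrable lborel (\<lambda>t. indicator P t *\<^sub>R h (- t))" by (simp add: indN)
  qed
  also have "(\<lambda>t. indicator P t *\<^sub>R h t + indicator P t *\<^sub>R h (- t))
      = (\<lambda>t. - 2 * \<i> * complex_of_real (indicator P t * (sin (t * a) / t)))"
  proof (rule ext)
    fix t
    have "h t + h (- t) = (iexp (- (t * a)) - iexp (t * a)) / complex_of_real t"
      by (simp add: h_def diff_divide_distrib)
    also have "\<dots> = - 2 * \<i> * complex_of_real (sin (t * a) / t)"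
      unfolding iexp_minus_diff by simp
    finally have hh: "h t + h (- t) = - 2 * \<i> * complex_of_real (sin (t * a) / t)" .
    have "indicator P t *\<^sub>R h t + indicator P t *\<^sub>R h (- t) = indicator P t *\<^sub>R (h t + h (- t))"
      by (simp only: scaleR_add_right)
    also have "\<dots> = indicator P t *\<^sub>R (- 2 * \<i> * complex_of_real (sin (t * a) / t))"
      by (simp only: hh)
    also have "\<dots> = - 2 * \<i> * complex_of_real (indicator P t * (sin (t * a) / t))"
      by (simp only: scaleR_conv_of_real of_real_mult mult_ac)
    finally show "indicator P t *\<^sub>R h t + indicator P t *\<^sub>R h (- t) = - 2 * \<i> * complex_of_real (indicator P t * (sin (t * a) / t))" .
  qed
  also have "(\<integral>t. - 2 * \<i> * complex_of_real (indicator P t * (sin (t * a) / t)) \<partial>lborel)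
      = - 2 * \<i> * complex_of_real (\<integral>t. indicator P t * (sin (t * a) / t) \<partial>lborel)"
    by (subst integral_mult_right_zero) (simp only: integral_complex_of_real)
  also have "(\<integral>t. indicator P t * (sin (t * a) / t) \<partial>lborel) = Si (a / e) - Si (a * e)"
    unfolding P_def by (rule ftc_sin_over[OF e])
  finally show ?thesis by (simp add: h_def)
qed

lemma vec_nth_meas[measurable]: "(\<lambda>x::R3. x $ j) \<in> borel_measurable borel"
  by (rule borel_measurable_continuous_onI) (intro continuous_intros)

lemma of_real_meas[measurable]: "(complex_of_real :: real \<Rightarrow> complex) \<in> borel_measurable borel"
  by (rule borel_measurable_continuous_onI) (intro continuous_intros)

lemma ev_01: "\<forall>\<^sub>F e in at_right (0::real). 0 < e \<and> e < 1"
  unfolding eventually_at_right_field by (intro exI[of _ 1]) auto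

lemma hilbert:
  fixes g :: "R3 \<Rightarrow> complex" and j :: 3 and \<xi> :: R3
  assumes ig: "integrable lborel g"
  shows "((\<lambda>e. \<integral>\<eta>. indicator {\<eta>. e < \<bar>\<xi>$j - \<eta>\<bar> \<and> \<bar>\<xi>$j - \<eta>\<bar> < 1 / e} \<eta> *\<^sub>R
              (fourier g (\<xi> + (\<eta> - \<xi>$j) *\<^sub>R axis j 1) / complex_of_real (\<xi>$j - \<eta>)) \<partial>lborel)
          \<longlongrightarrow> - \<i> * complex_of_real pi * fourier (\<lambda>x. complex_of_real (sgn (x$j)) * g x) \<xi>) (at_right 0)"
proof -
  have mg[measurable]: "g \<in> borel_measurable borel" using borel_measurable_integrable[OF ig] by simp
  define s where "s = \<xi>$j"
  define A where "A e t = (indicator {t. e < \<bar>t\<bar> \<and> \<bar>t\<bar> < 1/e} t :: real)" for e t :: real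
  define I where "I e = (\<integral>\<eta>. indicator {\<eta>. e < \<bar>s - \<eta>\<bar> \<and> \<bar>s - \<eta>\<bar> < 1 / e} \<eta> *\<^sub>R
              (fourier g (\<xi> + (\<eta> - s) *\<^sub>R axis j 1) / complex_of_real (s - \<eta>)) \<partial>lborel)" for e
  define H where "H e x = iexp (x \<bullet> \<xi>) * g x * (- 2 * \<i> * complex_of_real (Si (x$j / e) - Si (x$j * e)))" for e x
  define F where "F x = iexp (x \<bullet> \<xi>) * g x * (- 2 * \<i> * complex_of_real (sgn (x$j) * (pi / 2)))" for x
  have step1: "I e = (\<integral>t. A e t *\<^sub>R (fourier g (\<xi> - t *\<^sub>R axis j 1) / complex_of_real t) \<partial>lborel)" for e
  proof -
    have "I e = \<bar>-1\<bar> *\<^sub>R (\<integral>t. indicator {\<eta>. e < \<bar>s - \<eta>\<bar> \<and> \<bar>s - \<eta>\<bar> < 1 / e} (s + (-1) * t) *\<^sub>R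
              (fourier g (\<xi> + ((s + (-1) * t) - s) *\<^sub>R axis j 1) / complex_of_real (s - (s + (-1) * t))) \<partial>lborel)"
      unfolding I_def by (rule lborel_integral_real_affine) simp
    also have "\<dots> = (\<integral>t. A e t *\<^sub>R (fourier g (\<xi> - t *\<^sub>R axis j 1) / complex_of_real t) \<partial>lborel)"
      by (simp add: A_def indicator_def)
    finally show ?thesis .
  qed
  have step2: "I e = integral\<^sup>L lborel (H e)" if e: "0 < e" "e < 1" for e
  proof -
    define \<Phi> where "\<Phi> t x = A e t *\<^sub>R (iexp (x \<bullet> \<xi>) * g x * iexp (- (t * x$j)) / complex_of_real t)" for t x
    have mA[measurable]: "(\<lambda>t. A e t) \<in> borel_measurable borel" unfolding A_def by measurable
    have iB: "integrable lborel (\<lambda>t. indicator {-(1/e)..1/e} t *\<^sub>R (1/e))"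
      using borel_integrable_atLeastAtMost'[of "-(1/e)" "1/e" "\<lambda>_. 1/e"] unfolding set_integrable_def by simp
    have iPhi: "integrable (lborel \<Otimes>\<^sub>M lborel) (\<lambda>(t, x). \<Phi> t x)"
    proof (rule Bochner_Integration.integrable_bound)
      show "integrable (lborel \<Otimes>\<^sub>M lborel) (\<lambda>p. (indicator {-(1/e)..1/e} (fst p) *\<^sub>R (1/e)) * norm (g (snd p)))"
        by (rule integrable_prod_mult[OF iB integrable_norm[OF ig]])
      show "(\<lambda>(t, x). \<Phi> t x) \<in> borel_measurable (lborel \<Otimes>\<^sub>M lborel)"
        unfolding \<Phi>_def by measurable
      show "AE p in lborel \<Otimes>\<^sub>M lborel. norm (case p of (t, x) \<Rightarrow> \<Phi> t x) \<le> norm ((indicator {-(1/e)..1/e} (fst p) *\<^sub>R (1/e)) * norm (g (snd p)))"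
      proof (intro AE_I2)
        fix p :: "real \<times> R3"
        obtain t x where p: "p = (t, x)" by (cases p)
        show "norm (case p of (t, x) \<Rightarrow> \<Phi> t x) \<le> norm ((indicator {-(1/e)..1/e} (fst p) *\<^sub>R (1/e)) * norm (g (snd p)))"
        proof (cases "e < \<bar>t\<bar> \<and> \<bar>t\<bar> < 1/e")
          case True
          then have t0: "\<bar>t\<bar> > 0" "1 / \<bar>t\<bar> \<le> 1/e" using e by (auto simp: field_simps)
          have "norm (\<Phi> t x) = norm (g x) / \<bar>t\<bar>"
            using True by (simp add: \<Phi>_def A_def norm_mult norm_divide)
          also have "\<dots> = norm (g x) * (1 / \<bar>t\<bar>)" by simp
          also have "\<dots> \<le> norm (g x) * (1/e)" by (intro mult_left_mono t0) auto
          finally have le1: "norm (\<Phi> t x) \<le> norm (g x) * (1/e)" .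
          have "indicator {-(1/e)..1/e} t = (1::real)" using True by (auto simp: indicator_def abs_less_iff)
          then show ?thesis using le1 e by (simp add: p mult.commute)
        next
          case False
          then show ?thesis by (simp add: p \<Phi>_def A_def)
        qed
      qed
    qed
    have "I e = (\<integral>t. (\<integral>x. \<Phi> t x \<partial>lborel) \<partial>lborel)"
      unfolding step1
    proof (rule Bochner_Integration.integral_cong[OF refl])
      fix t
      have "fourier g (\<xi> - t *\<^sub>R axis j 1) = (\<integral>x. iexp (x \<bullet> \<xi>) * g x * iexp (- (t * x$j)) \<partial>lborel)"
        unfolding fourier_def
      proof (rule Bochner_Integration.integral_cong[OF refl])
        fix x
        have "x \<bullet> (\<xi> - t *\<^sub>R axis j 1) = x \<bullet> \<xi> + (- (t * x$j))"
          by (simp add: inner_diff_right inner_axis)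
        then show "iexp (x \<bullet> (\<xi> - t *\<^sub>R axis j 1)) * g x = iexp (x \<bullet> \<xi>) * g x * iexp (- (t * x$j))"
          by (simp only: iexp_add mult_ac)
      qed
      then show "A e t *\<^sub>R (fourier g (\<xi> - t *\<^sub>R axis j 1) / complex_of_real t) = (\<integral>x. \<Phi> t x \<partial>lborel)"
        by (simp add: \<Phi>_def)
    qed
    also have "\<dots> = (\<integral>x. (\<integral>t. \<Phi> t x \<partial>lborel) \<partial>lborel)"
      using lborel_pair.Fubini_integral[OF iPhi] by simp
    also have "\<dots> = integral\<^sup>L lborel (H e)"
    proof (rule Bochner_Integration.integral_cong[OF refl])
      fix x
      have "(\<integral>t. \<Phi> t x \<partial>lborel) = (\<integral>t. iexp (x \<bullet> \<xi>) * g x * (A e t *\<^sub>R (iexp (- (t * x$j)) / complex_of_real t)) \<partial>lborel)"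
        by (rule Bochner_Integration.integral_cong[OF refl]) (simp add: \<Phi>_def scaleR_conv_of_real mult_ac)
      also have "\<dots> = iexp (x \<bullet> \<xi>) * g x * (\<integral>t. A e t *\<^sub>R (iexp (- (t * x$j)) / complex_of_real t) \<partial>lborel)"
        by (rule integral_mult_right_zero)
      also have "(\<integral>t. A e t *\<^sub>R (iexp (- (t * x$j)) / complex_of_real t) \<partial>lborel) = - 2 * \<i> * complex_of_real (Si (x$j / e) - Si (x$j * e))"
        unfolding A_def by (rule k_formula[OF e])
      finally show "(\<integral>t. \<Phi> t x \<partial>lborel) = H e x" by (simp add: H_def)
    qed
    finally show ?thesis .
  qed
  obtain B where B: "\<And>a e. \<bar>Si (a / e) - Si (a * e)\<bar> \<le> B" using Si_diff_bound by blast
  have lim: "((\<lambda>e. integral\<^sup>L lborel (H e)) \<longlongrightarrow> integral\<^sup>L lborel F) (at_right 0)"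
  proof (rule dc_right0[where w = "\<lambda>x. 2 * B * norm (g x)"])
    show "integrable lborel (\<lambda>x. 2 * B * norm (g x))" using ig by simp
    show "F \<in> borel_measurable lborel" unfolding F_def by measurable
    show "H e \<in> borel_measurable lborel" for e unfolding H_def by measurable
    fix x :: R3
    show "((\<lambda>e. H e x) \<longlongrightarrow> F x) (at_right 0)"
      unfolding H_def F_def by (intro tendsto_intros Si_lim)
    fix e :: real
    show "norm (H e x) \<le> 2 * B * norm (g x)"
    proof -
      have "norm (H e x) = norm (g x) * (2 * \<bar>Si (x$j / e) - Si (x$j * e)\<bar>)"
        unfolding H_def by (simp add: norm_mult del: of_real_diff)
      also have "\<dots> \<le> norm (g x) * (2 * B)"
        using B[of "x$j" e] by (intro mult_left_mono) auto
      finally show ?thesis by (simp add: mult_ac)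
    qed
  qed
  have ev: "\<forall>\<^sub>F e in at_right 0. integral\<^sup>L lborel (H e) = I e"
    using ev_01 by eventually_elim (simp add: step2)
  have limI: "(I \<longlongrightarrow> integral\<^sup>L lborel F) (at_right 0)"
    by (rule Lim_transform_eventually[OF lim ev])
  have "integral\<^sup>L lborel F = - \<i> * complex_of_real pi * fourier (\<lambda>x. complex_of_real (sgn (x$j)) * g x) \<xi>"
  proof -
    have "integral\<^sup>L lborel F = (\<integral>x. (- \<i> * complex_of_real pi) * (iexp (x \<bullet> \<xi>) * (complex_of_real (sgn (x$j)) * g x)) \<partial>lborel)"
      by (rule Bochner_Integration.integral_cong[OF refl]) (simp add: F_def mult_ac)
    also have "\<dots> = - \<i> * complex_of_real pi * fourier (\<lambda>x. complex_of_real (sgn (x$j)) * g x) \<xi>"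
      unfolding fourier_def by (rule integral_mult_right_zero)
    finally show ?thesis .
  qed
  with limI show ?thesis unfolding I_def s_def by simp
qed

lemma integrable_bounded_mult:
  fixes g h :: "R3 \<Rightarrow> complex"
  assumes "integrable lborel g" "h \<in> borel_measurable borel" "\<And>x. norm (h x) \<le> K"
  shows "integrable lborel (\<lambda>x. h x * g x)"
proof (rule Bochner_Integration.integrable_bound[of _ "\<lambda>x. K * norm (g x)"])
  show "integrable lborel (\<lambda>x. K * norm (g x))" using assms(1) by simp
  show "(\<lambda>x. h x * g x) \<in> borel_measurable lborel"
    using assms(2) borel_measurable_integrable[OF assms(1)] by measurable
  show "AE x in lborel. norm (h x * g x) \<le> norm (K * norm (g x))"
  proof (intro AE_I2)
    fix x
    have "norm (h x * g x) \<le> K * norm (g x)"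
      using assms(3)[of x] by (simp add: norm_mult mult_right_mono)
    then show "norm (h x * g x) \<le> norm (K * norm (g x))" by (smt (verit) real_norm_def)
  qed
qed

lemma fourier_add:
  assumes "integrable lborel f" "integrable lborel g"
  shows "fourier (\<lambda>x. f x + g x) \<xi> = fourier f \<xi> + fourier g \<xi>"
proof -
  have m: "(\<lambda>x. iexp (x \<bullet> \<xi>)) \<in> borel_measurable borel" by measurable
  have i1: "integrable lborel (\<lambda>x. iexp (x \<bullet> \<xi>) * f x)"
    by (rule integrable_bounded_mult[OF assms(1) m, where K=1]) simp
  have i2: "integrable lborel (\<lambda>x. iexp (x \<bullet> \<xi>) * g x)"
    by (rule integrable_bounded_mult[OF assms(2) m, where K=1]) simp
  show ?thesis unfolding fourier_def
    by (simp add: distrib_left Bochner_Integration.integral_add[OF i1 i2])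
qed

lemma fourier_cmult: "fourier (\<lambda>x. c * f x) \<xi> = c * fourier f \<xi>"
  unfolding fourier_def by (simp add: mult.left_commute)

lemma sgn_meas[measurable]: "(\<lambda>x::real. sgn x) \<in> borel_measurable borel"
proof -
  have "(\<lambda>x::real. sgn x) = (\<lambda>x. if x > 0 then 1 else if x < 0 then -1 else 0)"
    by (auto simp: fun_eq_iff sgn_if)
  moreover have "(\<lambda>x::real. if x > 0 then 1 else if x < 0 then -1 else (0::real)) \<in> borel_measurable borel"
    by measurable
  ultimately show ?thesis by simp
qed

definition pw :: "real \<Rightarrow> complex" where "pw t = complex_of_real ((1 + sgn t) / 2)"
definition qw :: "real \<Rightarrow> complex" where "qw t = complex_of_real ((1 - sgn t) / 2)"

lemma pw_meas[measurable]: "pw \<in> borel_measurable borel" unfolding pw_def by measurable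
lemma qw_meas[measurable]: "qw \<in> borel_measurable borel" unfolding qw_def by measurable

lemma norm_pw: "norm (pw t) \<le> 1" unfolding pw_def by (auto simp: sgn_real_def)
lemma norm_qw: "norm (qw t) \<le> 1" unfolding qw_def by (auto simp: sgn_real_def)
lemma norm_sgn_c: "norm (complex_of_real (sgn t)) \<le> 1" by (auto simp: sgn_real_def)

lemma integrable_w_mult:
  fixes g :: "R3 \<Rightarrow> complex"
  assumes "integrable lborel g"
  shows "integrable lborel (\<lambda>x. pw (x$j) * g x)" "integrable lborel (\<lambda>x. qw (x$j) * g x)"
    "integrable lborel (\<lambda>x. complex_of_real (sgn (x$j)) * g x)"
proof -
  show "integrable lborel (\<lambda>x. pw (x$j) * g x)"
    by (rule integrable_bounded_mult[OF assms _ norm_pw]) measurable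
  show "integrable lborel (\<lambda>x. qw (x$j) * g x)"
    by (rule integrable_bounded_mult[OF assms _ norm_qw]) measurable
  show "integrable lborel (\<lambda>x. complex_of_real (sgn (x$j)) * g x)"
    by (rule integrable_bounded_mult[OF assms _ norm_sgn_c]) measurable
qed

lemma vector_upd1: "vector [\<eta>, (\<xi>::R3)$2, \<xi>$3] = \<xi> + (\<eta> - \<xi>$1) *\<^sub>R axis 1 (1::real)"
  by (simp add: vec3_eq axis_def)
lemma vector_upd2: "vector [(\<xi>::R3)$1, \<eta>, \<xi>$3] = \<xi> + (\<eta> - \<xi>$2) *\<^sub>R axis 2 (1::real)"
  by (simp add: vec3_eq axis_def)

lemma S1_fourier:
  assumes "integrable lborel g"
  shows "S1 (fourier g) \<xi> = fourier (\<lambda>x. complex_of_real (sgn (x$1)) * g x) \<xi>"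
proof -
  have "pv_integral (\<lambda>\<eta>. fourier g (vector [\<eta>, \<xi>$2, \<xi>$3]) / complex_of_real (\<xi>$1 - \<eta>)) (\<xi>$1)
      = - \<i> * complex_of_real pi * fourier (\<lambda>x. complex_of_real (sgn (x$1)) * g x) \<xi>"
    unfolding pv_integral_def vector_upd1
    by (rule tendsto_Lim[OF trivial_limit_at_right_real hilbert[OF assms]])
  then show ?thesis unfolding S1_def by simp
qed

lemma S2_fourier:
  assumes "integrable lborel g"
  shows "S2 (fourier g) \<xi> = fourier (\<lambda>x. complex_of_real (sgn (x$2)) * g x) \<xi>"
proof -
  have "pv_integral (\<lambda>\<eta>. fourier g (vector [\<xi>$1, \<eta>, \<xi>$3]) / complex_of_real (\<xi>$2 - \<eta>)) (\<xi>$2)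
      = - \<i> * complex_of_real pi * fourier (\<lambda>x. complex_of_real (sgn (x$2)) * g x) \<xi>"
    unfolding pv_integral_def vector_upd2
    by (rule tendsto_Lim[OF trivial_limit_at_right_real hilbert[OF assms]])
  then show ?thesis unfolding S2_def by simp
qed

lemma half_sum_p:
  assumes "integrable lborel g"
  shows "(fourier g \<xi> + fourier (\<lambda>x. complex_of_real (sgn (x$j)) * g x) \<xi>) / 2 = fourier (\<lambda>x. pw (x$j) * g x) \<xi>"
proof -
  have "fourier g \<xi> + fourier (\<lambda>x. complex_of_real (sgn (x$j)) * g x) \<xi> = fourier (\<lambda>x. g x + complex_of_real (sgn (x$j)) * g x) \<xi>"
    by (rule fourier_add[symmetric]) (use assms integrable_w_mult[OF assms] in auto)
  also have "\<dots> = fourier (\<lambda>x. 2 * (pw (x$j) * g x)) \<xi>"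
    by (rule arg_cong[where f = "\<lambda>f. fourier f \<xi>"]) (auto simp: pw_def field_simps)
  finally show ?thesis by (simp add: fourier_cmult)
qed

lemma half_diff_q:
  assumes "integrable lborel g"
  shows "(fourier g \<xi> - fourier (\<lambda>x. complex_of_real (sgn (x$j)) * g x) \<xi>) / 2 = fourier (\<lambda>x. qw (x$j) * g x) \<xi>"
proof -
  define h where "h x = complex_of_real (sgn (x$j)) * g x" for x
  have ih: "integrable lborel h" unfolding h_def by (rule integrable_w_mult[OF assms])
  have m: "fourier (\<lambda>x. - h x) \<xi> = - fourier h \<xi>" unfolding fourier_def by simp
  have ih': "integrable lborel (\<lambda>x. - h x)" using ih by simp
  have "fourier g \<xi> - fourier h \<xi> = fourier g \<xi> + fourier (\<lambda>x. - h x) \<xi>" by (simp add: m)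
  also have "\<dots> = fourier (\<lambda>x. g x + - h x) \<xi>"
    by (rule fourier_add[symmetric, OF assms ih'])
  also have "\<dots> = fourier (\<lambda>x. 2 * (qw (x$j) * g x)) \<xi>"
    by (rule arg_cong[where f = "\<lambda>f. fourier f \<xi>"]) (auto simp: qw_def h_def field_simps)
  also have "\<dots> = 2 * fourier (\<lambda>x. qw (x$j) * g x) \<xi>" by (rule fourier_cmult)
  finally show ?thesis unfolding h_def by simp
qed

lemma P1_fourier: "integrable lborel g \<Longrightarrow> P1 (fourier g) = fourier (\<lambda>x. pw (x$1) * g x)"
  by (rule ext) (simp add: P1_def S1_fourier half_sum_p)
lemma Q1_fourier: "integrable lborel g \<Longrightarrow> Q1 (fourier g) = fourier (\<lambda>x. qw (x$1) * g x)"
  by (rule ext) (simp add: Q1_def S1_fourier half_diff_q)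
lemma P2_fourier: "integrable lborel g \<Longrightarrow> P2 (fourier g) = fourier (\<lambda>x. pw (x$2) * g x)"
  by (rule ext) (simp add: P2_def S2_fourier half_sum_p)
lemma Q2_fourier: "integrable lborel g \<Longrightarrow> Q2 (fourier g) = fourier (\<lambda>x. qw (x$2) * g x)"
  by (rule ext) (simp add: Q2_def S2_fourier half_diff_q)

definition Sh :: "real \<Rightarrow> real \<Rightarrow> R3 \<Rightarrow> R3" where
  "Sh \<alpha> \<beta> y = vector [y$1, y$2, y$3 + \<alpha> * y$1 + \<beta> * y$2]"

lemma cont_Sh: "continuous_on UNIV (Sh \<alpha> \<beta>)"
  unfolding Sh_def vector3_alt by (intro continuous_intros)

lemma Sh_meas[measurable]: "Sh \<alpha> \<beta> \<in> borel_measurable borel"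
  using cont_Sh by (rule borel_measurable_continuous_onI)

lemma nnE3:
  fixes f :: "R3 \<Rightarrow> ennreal"
  assumes [measurable]: "f \<in> borel_measurable borel"
  shows "(\<integral>\<^sup>+x. f x \<partial>lborel) = (\<integral>\<^sup>+p. (\<integral>\<^sup>+t. f (E3 (t, p)) \<partial>lborel) \<partial>lborel)"
proof -
  have "(\<integral>\<^sup>+x. f x \<partial>lborel) = (\<integral>\<^sup>+x. f x \<partial>(distr lborel borel E3))" by (simp add: lborel_E3)
  also have "\<dots> = (\<integral>\<^sup>+q. f (E3 q) \<partial>lborel)" by (rule nn_integral_distr) auto
  also have "\<dots> = (\<integral>\<^sup>+q. f (E3 q) \<partial>(lborel \<Otimes>\<^sub>M lborel))" by (simp add: lborel_prod3)
  also have "\<dots> = (\<integral>\<^sup>+p. (\<integral>\<^sup>+t. f (E3 (t, p)) \<partial>lborel) \<partial>lborel)"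
    by (rule lborel_pair.nn_integral_snd[symmetric]) (simp add: lborel_prod3[symmetric])
  finally show ?thesis .
qed

lemma nn_shear:
  fixes f :: "R3 \<Rightarrow> ennreal"
  assumes [measurable]: "f \<in> borel_measurable borel"
  shows "(\<integral>\<^sup>+x. f (Sh \<alpha> \<beta> x) \<partial>lborel) = (\<integral>\<^sup>+x. f x \<partial>lborel)"
proof -
  have "(\<integral>\<^sup>+x. f (Sh \<alpha> \<beta> x) \<partial>lborel) = (\<integral>\<^sup>+p. (\<integral>\<^sup>+t. f (Sh \<alpha> \<beta> (E3 (t, p))) \<partial>lborel) \<partial>lborel)"
    by (rule nnE3) measurable
  also have "\<dots> = (\<integral>\<^sup>+p. (\<integral>\<^sup>+t. f (E3 (t, p)) \<partial>lborel) \<partial>lborel)"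
  proof (rule nn_integral_cong)
    fix p :: "real \<times> real"
    have e: "Sh \<alpha> \<beta> (E3 (t, p)) = E3 ((\<alpha> * fst p + \<beta> * snd p) + 1 * t, p)" for t
      by (simp add: Sh_def E3_def vec3_eq split_beta algebra_simps)
    have m: "(\<lambda>t. f (E3 (t, p))) \<in> borel_measurable borel" by measurable
    show "(\<integral>\<^sup>+t. f (Sh \<alpha> \<beta> (E3 (t, p))) \<partial>lborel) = (\<integral>\<^sup>+t. f (E3 (t, p)) \<partial>lborel)"
      unfolding e using nn_integral_real_affine[OF m, of 1 "\<alpha> * fst p + \<beta> * snd p"] by simp
  qed
  also have "\<dots> = (\<integral>\<^sup>+x. f x \<partial>lborel)" by (rule nnE3[symmetric]) simp
  finally show ?thesis .
qed

lemma lborel_shear: "distr lborel borel (Sh \<alpha> \<beta>) = lborel"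
proof (rule measure_eqI)
  fix A :: "R3 set" assume "A \<in> sets (distr lborel borel (Sh \<alpha> \<beta>))"
  then have A[measurable]: "A \<in> sets borel" by simp
  have S: "Sh \<alpha> \<beta> -` A \<in> sets lborel" using measurable_sets[OF Sh_meas A] by simp
  have "emeasure (distr lborel borel (Sh \<alpha> \<beta>)) A = emeasure lborel (Sh \<alpha> \<beta> -` A)"
    by (simp add: emeasure_distr)
  also have "\<dots> = (\<integral>\<^sup>+x. indicator (Sh \<alpha> \<beta> -` A) x \<partial>lborel)"
    using S by simp
  also have "\<dots> = (\<integral>\<^sup>+x. indicator A (Sh \<alpha> \<beta> x) \<partial>lborel)"
    by (simp add: indicator_def)
  also have "\<dots> = (\<integral>\<^sup>+x. indicator A x \<partial>lborel)" by (rule nn_shear) simp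
  also have "\<dots> = emeasure lborel A" by simp
  finally show "emeasure (distr lborel borel (Sh \<alpha> \<beta>)) A = emeasure lborel A" .
qed simp

lemma phase_Sh: "Sh \<alpha> \<beta> y \<bullet> \<xi> = y \<bullet> vector [\<xi>$1 + \<alpha> * \<xi>$3, \<xi>$2 + \<beta> * \<xi>$3, \<xi>$3]"
  by (simp add: Sh_def inner3 algebra_simps)

lemma shear_fourier:
  fixes w :: "real \<Rightarrow> real \<Rightarrow> complex" and u :: "R3 \<Rightarrow> complex"
  assumes [measurable]: "u \<in> borel_measurable borel" "(\<lambda>x::R3. w (x$1) (x$2)) \<in> borel_measurable borel"
  shows "fourier (\<lambda>x::R3. w (x$1) (x$2) * u (vector [x$1, x$2, x$3 - (\<alpha> * x$1 + \<beta> * x$2)])) \<xi>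
       = fourier (\<lambda>y::R3. w (y$1) (y$2) * u y) (vector [\<xi>$1 + \<alpha> * \<xi>$3, \<xi>$2 + \<beta> * \<xi>$3, \<xi>$3])"
proof -
  define F where "F (x::R3) = iexp (x \<bullet> \<xi>) * (w (x$1) (x$2) * u (vector [x$1, x$2, x$3 - (\<alpha> * x$1 + \<beta> * x$2)]))" for x
  have cv: "continuous_on UNIV (\<lambda>x::R3. vector [x$1, x$2, x$3 - (\<alpha> * x$1 + \<beta> * x$2)] :: R3)"
    unfolding vector3_alt by (intro continuous_intros)
  have mv[measurable]: "(\<lambda>x::R3. vector [x$1, x$2, x$3 - (\<alpha> * x$1 + \<beta> * x$2)] :: R3) \<in> borel_measurable borel"
    using cv by (rule borel_measurable_continuous_onI)
  have mF[measurable]: "F \<in> borel_measurable borel" unfolding F_def by measurable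
  have "fourier (\<lambda>x. w (x$1) (x$2) * u (vector [x$1, x$2, x$3 - (\<alpha> * x$1 + \<beta> * x$2)])) \<xi> = integral\<^sup>L lborel F"
    unfolding fourier_def F_def ..
  also have "\<dots> = integral\<^sup>L (distr lborel borel (Sh \<alpha> \<beta>)) F" by (simp add: lborel_shear)
  also have "\<dots> = (\<integral>y. F (Sh \<alpha> \<beta> y) \<partial>lborel)" by (rule integral_distr) auto
  also have "\<dots> = fourier (\<lambda>y. w (y$1) (y$2) * u y) (vector [\<xi>$1 + \<alpha> * \<xi>$3, \<xi>$2 + \<beta> * \<xi>$3, \<xi>$3])"
    unfolding fourier_def
  proof (rule Bochner_Integration.integral_cong[OF refl])
    fix y :: R3
    have v: "vector [y $ 1, y $ 2, Sh \<alpha> \<beta> y $ 3 - (\<alpha> * y $ 1 + \<beta> * y $ 2)] = y"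
      by (simp add: Sh_def vec3_eq)
    have s12: "Sh \<alpha> \<beta> y $ 1 = y $ 1" "Sh \<alpha> \<beta> y $ 2 = y $ 2" by (simp_all add: Sh_def)
    show "F (Sh \<alpha> \<beta> y) = iexp (y \<bullet> vector [\<xi>$1 + \<alpha> * \<xi>$3, \<xi>$2 + \<beta> * \<xi>$3, \<xi>$3]) * (w (y$1) (y$2) * u y)"
      unfolding F_def s12 v phase_Sh ..
  qed
  finally show ?thesis .
qed

lemma integrable_shear:
  fixes u :: "R3 \<Rightarrow> complex"
  assumes iu: "integrable lborel u"
  shows "integrable lborel (\<lambda>x::R3. u (vector [x$1, x$2, x$3 - (\<alpha> * x$1 + \<beta> * x$2)]))"
proof -
  have mu: "u \<in> borel_measurable borel" using borel_measurable_integrable[OF iu] by simp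
  have "integrable (distr lborel borel (Sh (-\<alpha>) (-\<beta>))) u" using iu by (simp add: lborel_shear)
  then have "integrable lborel (\<lambda>x. u (Sh (-\<alpha>) (-\<beta>) x))"
    by (subst (asm) integrable_distr_eq) (auto simp: mu)
  moreover have "Sh (-\<alpha>) (-\<beta>) x = vector [x$1, x$2, x$3 - (\<alpha> * x$1 + \<beta> * x$2)]" for x
    by (simp add: Sh_def vec3_eq)
  ultimately show ?thesis by simp
qed

lemma split_1d:
  assumes "a > 0" "c > 0"
  shows "pw y * h (a * y) + qw y * h (- c * y) = h (max (a * y) (- c * y))"
proof (cases y "0::real" rule: linorder_cases)
  case less
  then have "a * y < 0" "- c * y > 0" using assms by (auto simp: mult_pos_neg mult_neg_neg)
  then have "max (a * y) (- c * y) = - c * y" by simp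
  then show ?thesis using less by (simp add: pw_def qw_def)
next
  case equal then show ?thesis by (simp add: pw_def qw_def field_simps)
next
  case greater
  then have "a * y > 0" "- c * y < 0" using assms by (auto simp: mult_pos_pos)
  then have "max (a * y) (- c * y) = a * y" by simp
  then show ?thesis using greater by (simp add: pw_def qw_def)
qed

theorem lemma2:
  fixes a b c d :: real and u :: "R3 \<Rightarrow> complex"
  assumes "a > 0" "b > 0" "c > 0" "d > 0"
    and "schwartz u"
  shows "\<forall>\<xi>. V_phi a b c d (fourier u) \<xi> =
      P1 (P2 (fourier u)) (vector [\<xi>$1 + a * \<xi>$3, \<xi>$2 + b * \<xi>$3, \<xi>$3])
    + Q1 (P2 (fourier u)) (vector [\<xi>$1 - c * \<xi>$3, \<xi>$2 + b * \<xi>$3, \<xi>$3])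
    + Q1 (Q2 (fourier u)) (vector [\<xi>$1 - c * \<xi>$3, \<xi>$2 - d * \<xi>$3, \<xi>$3])
    + P1 (Q2 (fourier u)) (vector [\<xi>$1 + a * \<xi>$3, \<xi>$2 - d * \<xi>$3, \<xi>$3])"
proof (intro allI)
  fix \<xi> :: R3
  note su = assms(5)
  have iu: "integrable lborel u" using schwartz_integrable[OF su, of "[]"] by simp
  have mu[measurable]: "u \<in> borel_measurable borel" using schwartz_meas[OF su, of "[]"] by simp
  have inv: "fourier_inv (fourier u) = u" by (rule ext) (rule fourier_inversion[OF su])
  define G where "G \<alpha> \<beta> x = u (vector [x$1, x$2, x$3 - (\<alpha> * x$1 + \<beta> * x$2)])" for \<alpha> \<beta> and x :: R3
  have iG: "integrable lborel (G \<alpha> \<beta>)" for \<alpha> \<beta>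
    unfolding G_def[abs_def] by (rule integrable_shear[OF iu])
  define w1 where "w1 s t = pw s * pw t" for s t
  define w2 where "w2 s t = qw s * pw t" for s t
  define w3' where "w3' s t = qw s * qw t" for s t
  define w4 where "w4 s t = pw s * qw t" for s t
  have mw[measurable]: "(\<lambda>x::R3. w1 (x$1) (x$2)) \<in> borel_measurable borel" "(\<lambda>x::R3. w2 (x$1) (x$2)) \<in> borel_measurable borel"
    "(\<lambda>x::R3. w3' (x$1) (x$2)) \<in> borel_measurable borel" "(\<lambda>x::R3. w4 (x$1) (x$2)) \<in> borel_measurable borel"
    unfolding w1_def w2_def w3'_def w4_def by measurable
  have nw: "norm (w1 s t) \<le> 1" "norm (w2 s t) \<le> 1" "norm (w3' s t) \<le> 1" "norm (w4 s t) \<le> 1" for s t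
    unfolding w1_def w2_def w3'_def w4_def norm_mult
    using norm_pw[of s] norm_pw[of t] norm_qw[of s] norm_qw[of t] by (auto intro: mult_le_one)
  have i1: "integrable lborel (\<lambda>x. w1 (x$1) (x$2) * G a b x)"
    by (rule integrable_bounded_mult[OF iG mw(1) nw(1)])
  have i2: "integrable lborel (\<lambda>x. w2 (x$1) (x$2) * G (-c) b x)"
    by (rule integrable_bounded_mult[OF iG mw(2) nw(2)])
  have i3: "integrable lborel (\<lambda>x. w3' (x$1) (x$2) * G (-c) (-d) x)"
    by (rule integrable_bounded_mult[OF iG mw(3) nw(3)])
  have i4: "integrable lborel (\<lambda>x. w4 (x$1) (x$2) * G a (-d) x)"
    by (rule integrable_bounded_mult[OF iG mw(4) nw(4)])
  have decomp: "T_phi a b c d u x = w1 (x$1) (x$2) * G a b x + w2 (x$1) (x$2) * G (-c) b x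
      + w3' (x$1) (x$2) * G (-c) (-d) x + w4 (x$1) (x$2) * G a (-d) x" for x
  proof -
    define h2 where "h2 s = u (vector [x$1, x$2, x$3 - s])" for s
    define m1 where "m1 = max (a * x$1) (- c * x$1)"
    define m2 where "m2 = max (b * x$2) (- d * x$2)"
    have G: "G \<alpha> \<beta> x = h2 (\<alpha> * x$1 + \<beta> * x$2)" for \<alpha> \<beta> unfolding G_def h2_def ..
    have e1: "pw (x$1) * h2 (a * x$1 + b * x$2) + qw (x$1) * h2 (- c * x$1 + b * x$2) = h2 (m1 + b * x$2)"
      using split_1d[OF assms(1,3), of "x$1" "\<lambda>s. h2 (s + b * x$2)"] by (simp add: m1_def)
    have e2: "pw (x$1) * h2 (a * x$1 + - d * x$2) + qw (x$1) * h2 (- c * x$1 + - d * x$2) = h2 (m1 + - d * x$2)"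
      using split_1d[OF assms(1,3), of "x$1" "\<lambda>s. h2 (s + - d * x$2)"] by (simp add: m1_def)
    have e3: "pw (x$2) * h2 (m1 + b * x$2) + qw (x$2) * h2 (m1 + - d * x$2) = h2 (m1 + m2)"
      using split_1d[OF assms(2,4), of "x$2" "\<lambda>s. h2 (m1 + s)"] by (simp add: m2_def)
    have "T_phi a b c d u x = h2 (m1 + m2)" by (simp add: T_phi_def phi_def h2_def m1_def m2_def)
    also have "\<dots> = pw (x$2) * (pw (x$1) * h2 (a * x$1 + b * x$2) + qw (x$1) * h2 (- c * x$1 + b * x$2))
        + qw (x$2) * (pw (x$1) * h2 (a * x$1 + - d * x$2) + qw (x$1) * h2 (- c * x$1 + - d * x$2))"
      unfolding e1 e2 e3 ..
    also have "\<dots> = w1 (x$1) (x$2) * G a b x + w2 (x$1) (x$2) * G (-c) b x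
      + w3' (x$1) (x$2) * G (-c) (-d) x + w4 (x$1) (x$2) * G a (-d) x"
      unfolding G w1_def w2_def w3'_def w4_def by (simp add: algebra_simps)
    finally show ?thesis .
  qed
  have "V_phi a b c d (fourier u) \<xi> = fourier (T_phi a b c d u) \<xi>"
    unfolding V_phi_def inv ..
  also have "\<dots> = fourier (\<lambda>x. w1 (x$1) (x$2) * G a b x + w2 (x$1) (x$2) * G (-c) b x
      + w3' (x$1) (x$2) * G (-c) (-d) x + w4 (x$1) (x$2) * G a (-d) x) \<xi>"
    unfolding decomp ..
  also have "\<dots> = fourier (\<lambda>x. w1 (x$1) (x$2) * G a b x) \<xi> + fourier (\<lambda>x. w2 (x$1) (x$2) * G (-c) b x) \<xi>
      + fourier (\<lambda>x. w3' (x$1) (x$2) * G (-c) (-d) x) \<xi> + fourier (\<lambda>x. w4 (x$1) (x$2) * G a (-d) x) \<xi>"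
    using i1 i2 i3 i4 by (simp add: fourier_add)
  also have "fourier (\<lambda>x. w1 (x$1) (x$2) * G a b x) \<xi> = fourier (\<lambda>y. w1 (y$1) (y$2) * u y) (vector [\<xi>$1 + a * \<xi>$3, \<xi>$2 + b * \<xi>$3, \<xi>$3])"
    unfolding G_def by (rule shear_fourier[OF mu mw(1)])
  also have "fourier (\<lambda>x. w2 (x$1) (x$2) * G (-c) b x) \<xi> = fourier (\<lambda>y. w2 (y$1) (y$2) * u y) (vector [\<xi>$1 + - c * \<xi>$3, \<xi>$2 + b * \<xi>$3, \<xi>$3])"
    unfolding G_def by (rule shear_fourier[OF mu mw(2)])
  also have "fourier (\<lambda>x. w3' (x$1) (x$2) * G (-c) (-d) x) \<xi> = fourier (\<lambda>y. w3' (y$1) (y$2) * u y) (vector [\<xi>$1 + - c * \<xi>$3, \<xi>$2 + - d * \<xi>$3, \<xi>$3])"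
    unfolding G_def by (rule shear_fourier[OF mu mw(3)])
  also have "fourier (\<lambda>x. w4 (x$1) (x$2) * G a (-d) x) \<xi> = fourier (\<lambda>y. w4 (y$1) (y$2) * u y) (vector [\<xi>$1 + a * \<xi>$3, \<xi>$2 + - d * \<xi>$3, \<xi>$3])"
    unfolding G_def by (rule shear_fourier[OF mu mw(4)])
  also have RHS: "P1 (P2 (fourier u)) = fourier (\<lambda>y. w1 (y$1) (y$2) * u y)"
    "Q1 (P2 (fourier u)) = fourier (\<lambda>y. w2 (y$1) (y$2) * u y)"
    "Q1 (Q2 (fourier u)) = fourier (\<lambda>y. w3' (y$1) (y$2) * u y)"
    "P1 (Q2 (fourier u)) = fourier (\<lambda>y. w4 (y$1) (y$2) * u y)"
    using integrable_w_mult[OF iu]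
    by (simp_all add: P2_fourier[OF iu] Q2_fourier[OF iu] P1_fourier Q1_fourier w1_def w2_def w3'_def w4_def mult.assoc)
  ultimately show "V_phi a b c d (fourier u) \<xi> =
      P1 (P2 (fourier u)) (vector [\<xi>$1 + a * \<xi>$3, \<xi>$2 + b * \<xi>$3, \<xi>$3])
    + Q1 (P2 (fourier u)) (vector [\<xi>$1 - c * \<xi>$3, \<xi>$2 + b * \<xi>$3, \<xi>$3])
    + Q1 (Q2 (fourier u)) (vector [\<xi>$1 - c * \<xi>$3, \<xi>$2 - d * \<xi>$3, \<xi>$3])
    + P1 (Q2 (fourier u)) (vector [\<xi>$1 + a * \<xi>$3, \<xi>$2 - d * \<xi>$3, \<xi>$3])"
    by simp
qed

end
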